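(* Let $\lambda$ be a partition. For each $\mu\in\mathcal{D}(\lambda)$, \[ \sum_{\nu\in\mathcal{U}(\lambda)}\mathcal{P}_\lambda(\mu\rightarrow\nu)=1, \] and for each $\nu\in\mathcal{U}(\lambda)$, \[ \sum_{\mu\in\mathcal{D}^*(\lambda)}\overline{\mathcal{P}}_\lambda(\mu\leftarrow\nu)=1. \]
   Context: Partitions are Young diagrams in French convention (cells $(x,y)\in\mathbb{Z}_{>0}^2$, $x\le\lambda_y$), $\lambda'$ the conjugate. For $c=(x,y)\in\lambda$: $a_\lambda(c)=\lambda_y-x$, $\ell_\lambda(c)=\lambda'_x-y$; $n(\kappa)=\sum_{c\in\kappa}\ell_\kappa(c)$, $n'(\kappa)=\sum_{c\in\kappa}a_\kappa(c)$, and for $\kappa\subseteq\rho$, $n(\rho/\kappa)=n(\rho)-n(\kappa)$, $n'(\rho/\kappa)=n'(\rho)-n'(\kappa)$. $\mathcal{U}(\lambda)$ (resp. $\mathcal{D}(\lambda)$) is the set of partitions obtained by adding (resp. removing) one cell; $\mathcal{D}^*(\lambda)=\mathcal{D}(\lambda)\cup\{\lambda\}$. For $\kappa\subseteq\rho$, $\mathcal{R}_{\rho/\kappa}$ (resp. $\mathcal{C}_{\rho/\kappa}$) is the set of cells of $\kappa$ in a row (resp. column) containing a cell of $\rho/\kappa$. With $[i,j]=1-q^it^j$, for $\kappa$ obtained from $\rho$ by removing one cell: $\alpha_{\rho/\kappa}=\prod_{c\in\mathcal{R}_{\rho/\kappa}}\frac{[a_\kappa(c),\ell_\kappa(c)+1]}{[a_\rho(c),\ell_\rho(c)+1]}\prod_{c\in\mathcal{C}_{\rho/\kappa}}\frac{[a_\kappa(c)+1,\ell_\kappa(c)]}{[a_\rho(c)+1,\ell_\rho(c)]}$,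 $\overline{\alpha}_{\rho/\kappa}=\prod_{c\in\mathcal{R}_{\rho/\kappa}}\frac{[a_\kappa(c)+1,\ell_\kappa(c)]}{[a_\rho(c)+1,\ell_\rho(c)]}\prod_{c\in\mathcal{C}_{\rho/\kappa}}\frac{[a_\kappa(c),\ell_\kappa(c)+1]}{[a_\rho(c),\ell_\rho(c)+1]}$, $\beta_{\rho/\kappa}=1/\alpha_{\rho/\kappa}$, $\overline{\beta}_{\rho/\kappa}=1/\overline{\alpha}_{\rho/\kappa}$. For $\mu\in\mathcal{D}(\lambda)$, $\nu\in\mathcal{U}(\lambda)$ put $A=n'(\lambda/\mu)-n'(\nu/\lambda)$, $B=n(\nu/\lambda)-n(\lambda/\mu)$, $\gamma_{\nu/\lambda/\mu}=\frac{(1-q^At^B)(1-q^{A+1}t^{B-1})}{(1-q)(1-t)}$, and $\mathcal{P}_\lambda(\mu\rightarrow\nu)=t^{B-1}\frac{\alpha_{\nu/\lambda}\beta_{\lambda/\mu}}{\gamma_{\nu/\lambda/\mu}}$, $\overline{\mathcal{P}}_\lambda(\mu\leftarrow\nu)=t^{B-1}\frac{\overline{\alpha}_{\nu/\lambda}\overline{\beta}_{\lambda/\mu}}{\gamma_{\nu/\lambda/\mu}}$. Also $\overline{\mathcal{P}}_\lambda(\lambda\leftarrow\nu)=t^{n(\nu/\lambda)}\overline{\alpha}_{\nu/\lambda}$. *)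

theory Defs
  imports Complex_Main
begin

text \<open>Partitions are represented as weakly decreasing lists of positive naturals;
  row y (counted from 1) has length la ! (y-1). Cells are pairs (x,y), French convention.\<close>

definition is_partition :: "nat list \<Rightarrow> bool" where
  "is_partition la \<longleftrightarrow> sorted_wrt (\<ge>) la \<and> 0 \<notin> set la"

definition part :: "nat list \<Rightarrow> nat \<Rightarrow> nat" where
  "part la y = (if 1 \<le> y \<and> y \<le> length la then la ! (y - 1) else 0)"

definition cells :: "nat list \<Rightarrow> (nat \<times> nat) set" where
  "cells la = {(x, y). 1 \<le> x \<and> 1 \<le> y \<and> x \<le> part la y}"

definition conj :: "nat list \<Rightarrow> nat \<Rightarrow> nat" where
  "conj la x = card {y. 1 \<le> y \<and> x \<le> part la y}"

definition arm :: "nat list \<Rightarrow> nat \<times> nat \<Rightarrow> int" where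
  "arm la c = int (part la (snd c)) - int (fst c)"

definition leg :: "nat list \<Rightarrow> nat \<times> nat \<Rightarrow> int" where
  "leg la c = int (conj la (fst c)) - int (snd c)"

definition nfun :: "nat list \<Rightarrow> int" where
  "nfun la = (\<Sum>c\<in>cells la. leg la c)"

definition nfun' :: "nat list \<Rightarrow> int" where
  "nfun' la = (\<Sum>c\<in>cells la. arm la c)"

definition Ups :: "nat list \<Rightarrow> nat list set" where
  "Ups la = {nu. is_partition nu \<and> cells la \<subseteq> cells nu \<and> card (cells nu - cells la) = 1}"

definition Downs :: "nat list \<Rightarrow> nat list set" where
  "Downs la = {mu. is_partition mu \<and> cells mu \<subseteq> cells la \<and> card (cells la - cells mu) = 1}"

definition Downs_star :: "nat list \<Rightarrow> nat list set" where
  "Downs_star la = insert la (Downs la)"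

definition Rset :: "nat list \<Rightarrow> nat list \<Rightarrow> (nat \<times> nat) set" where
  "Rset rho ka = {c \<in> cells ka. \<exists>d \<in> cells rho - cells ka. snd d = snd c}"

definition Cset :: "nat list \<Rightarrow> nat list \<Rightarrow> (nat \<times> nat) set" where
  "Cset rho ka = {c \<in> cells ka. \<exists>d \<in> cells rho - cells ka. fst d = fst c}"

definition br :: "real \<Rightarrow> real \<Rightarrow> int \<Rightarrow> int \<Rightarrow> real" where
  "br q t i j = 1 - q powi i * t powi j"

definition alpha :: "real \<Rightarrow> real \<Rightarrow> nat list \<Rightarrow> nat list \<Rightarrow> real" where
  "alpha q t rho ka =
     (\<Prod>c\<in>Rset rho ka. br q t (arm ka c) (leg ka c + 1) / br q t (arm rho c) (leg rho c + 1)) *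
     (\<Prod>c\<in>Cset rho ka. br q t (arm ka c + 1) (leg ka c) / br q t (arm rho c + 1) (leg rho c))"

definition alphabar :: "real \<Rightarrow> real \<Rightarrow> nat list \<Rightarrow> nat list \<Rightarrow> real" where
  "alphabar q t rho ka =
     (\<Prod>c\<in>Rset rho ka. br q t (arm ka c + 1) (leg ka c) / br q t (arm rho c + 1) (leg rho c)) *
     (\<Prod>c\<in>Cset rho ka. br q t (arm ka c) (leg ka c + 1) / br q t (arm rho c) (leg rho c + 1))"

definition beta :: "real \<Rightarrow> real \<Rightarrow> nat list \<Rightarrow> nat list \<Rightarrow> real" where
  "beta q t rho ka = 1 / alpha q t rho ka"

definition betabar :: "real \<Rightarrow> real \<Rightarrow> nat list \<Rightarrow> nat list \<Rightarrow> real" where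
  "betabar q t rho ka = 1 / alphabar q t rho ka"

definition Aexp :: "nat list \<Rightarrow> nat list \<Rightarrow> nat list \<Rightarrow> int" where
  "Aexp la mu nu = (nfun' la - nfun' mu) - (nfun' nu - nfun' la)"

definition Bexp :: "nat list \<Rightarrow> nat list \<Rightarrow> nat list \<Rightarrow> int" where
  "Bexp la mu nu = (nfun nu - nfun la) - (nfun la - nfun mu)"

definition gam :: "real \<Rightarrow> real \<Rightarrow> nat list \<Rightarrow> nat list \<Rightarrow> nat list \<Rightarrow> real" where
  "gam q t la mu nu =
     (let A = Aexp la mu nu; B = Bexp la mu nu in
      (1 - q powi A * t powi B) * (1 - q powi (A + 1) * t powi (B - 1)) / ((1 - q) * (1 - t)))"

definition Pdown :: "real \<Rightarrow> real \<Rightarrow> nat list \<Rightarrow> nat list \<Rightarrow> nat list \<Rightarrow> real" where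
  "Pdown q t la mu nu =
     t powi (Bexp la mu nu - 1) * (alpha q t nu la * beta q t la mu) / gam q t la mu nu"

definition Pbar :: "real \<Rightarrow> real \<Rightarrow> nat list \<Rightarrow> nat list \<Rightarrow> nat list \<Rightarrow> real" where
  "Pbar q t la mu nu =
     (if mu = la then t powi (nfun nu - nfun la) * alphabar q t nu la
      else t powi (Bexp la mu nu - 1) * (alphabar q t nu la * betabar q t la mu) / gam q t la mu nu)"

end

theory Submission
  imports "HOL-Computational_Algebra.Polynomial" Defs
begin

lemma DD:
  fixes S :: "real set" and p :: "real poly"
  assumes fin: "finite S" and deg: "degree p + 1 < card S"
  shows "(\<Sum>v\<in>S. poly p v / (\<Prod>v'\<in>S-{v}. (v - v'))) = 0"
proof -
  define n where "n = card S"
  define c where "c v = poly p v / (\<Prod>v'\<in>S-{v}. (v - v'))" for v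
  define B where "B v = (\<Prod>v'\<in>S-{v}. [:-v', 1:])" for v
  define Q where "Q = (\<Sum>v\<in>S. smult (c v) (B v))"
  have degB: "degree (B v) = n - 1" if "v \<in> S" for v
  proof -
    have "degree (B v) = (\<Sum>v'\<in>S-{v}. degree [:-v', 1:])"
      unfolding B_def by (rule degree_prod_eq_sum_degree) auto
    also have "\<dots> = card (S - {v})" by simp
    also have "\<dots> = n - 1" using that fin n_def by simp
    finally show ?thesis .
  qed
  have lcB: "coeff (B v) (n - 1) = 1" if "v \<in> S" for v
  proof -
    have "lead_coeff (B v) = 1" unfolding B_def lead_coeff_prod using fin by simp
    then show ?thesis using degB[OF that] by simp
  qed
  have degQ: "degree Q \<le> n - 1"
    unfolding Q_def
    by (rule degree_sum_le) (use fin in \<open>auto intro: order.trans[OF degree_smult_le] simp: degB\<close>)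
  have coeffQ: "coeff Q (n - 1) = (\<Sum>v\<in>S. c v)"
    unfolding Q_def coeff_sum coeff_smult using lcB by (intro sum.cong) auto
  have polyB: "poly (B v) u = (if u = v then (\<Prod>v'\<in>S-{v}. (v - v')) else 0)"
    if "v \<in> S" "u \<in> S" for u v
  proof -
    have "poly (B v) u = (\<Prod>v'\<in>S-{v}. (u - v'))" unfolding B_def poly_prod by simp
    moreover have "u \<noteq> v \<Longrightarrow> (\<Prod>v'\<in>S-{v}. (u - v')) = 0"
      using fin that by (intro prod_zero) auto
    ultimately show ?thesis by simp
  qed
  have polyQ: "poly Q u = poly p u" if "u \<in> S" for u
  proof -
    have "poly Q u = (\<Sum>v\<in>S. c v * poly (B v) u)" unfolding Q_def poly_sum by simp
    also have "\<dots> = (\<Sum>v\<in>S. if v = u then c u * (\<Prod>v'\<in>S-{u}. (u - v')) else 0)"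
      by (rule sum.cong) (auto simp: polyB that)
    also have "\<dots> = c u * (\<Prod>v'\<in>S-{u}. (u - v'))" using fin that by simp
    also have "\<dots> = poly p u"
    proof -
      have "(\<Prod>v'\<in>S-{u}. (u - v')) \<noteq> 0" using fin by (subst prod_zero_iff) auto
      then show ?thesis unfolding c_def by simp
    qed
    finally show ?thesis .
  qed
  have "Q = p"
    by (rule poly_eqI_degree[of S]) (use polyQ degQ deg n_def in auto)
  then have "coeff p (n - 1) = (\<Sum>v\<in>S. c v)" using coeffQ by simp
  moreover have "coeff p (n - 1) = 0" using deg n_def by (intro coeff_eq_0) auto
  ultimately show ?thesis unfolding c_def by simp
qed

lemma part_0[simp]: "part la 0 = 0" by (simp add: part_def)
lemma part_gt: "length la < r \<Longrightarrow> part la r = 0" by (simp add: part_def)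

lemma is_partition_iff_part:
  "is_partition la \<longleftrightarrow>
    (\<forall>i j. 1 \<le> i \<longrightarrow> i \<le> j \<longrightarrow> j \<le> length la \<longrightarrow> part la j \<le> part la i) \<and>
    (\<forall>r. 1 \<le> r \<longrightarrow> r \<le> length la \<longrightarrow> 0 < part la r)"
proof -
  have A: "sorted_wrt (\<ge>) la \<longleftrightarrow>
    (\<forall>i j. 1 \<le> i \<longrightarrow> i \<le> j \<longrightarrow> j \<le> length la \<longrightarrow> part la j \<le> part la i)"
  proof
    assume s: "sorted_wrt (\<ge>) la"
    show "\<forall>i j. 1 \<le> i \<longrightarrow> i \<le> j \<longrightarrow> j \<le> length la \<longrightarrow> part la j \<le> part la i"
    proof (intro allI impI)
      fix i j :: nat assume h: "1 \<le> i" "i \<le> j" "j \<le> length la"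
      show "part la j \<le> part la i"
      proof (cases "i = j")
        case False
        then have "la ! (j - 1) \<le> la ! (i - 1)"
          using sorted_wrt_nth_less[OF s, of "i - 1" "j - 1"] h by auto
        then show ?thesis using h by (simp add: part_def)
      qed simp
    qed
  next
    assume h: "\<forall>i j. 1 \<le> i \<longrightarrow> i \<le> j \<longrightarrow> j \<le> length la \<longrightarrow> part la j \<le> part la i"
    show "sorted_wrt (\<ge>) la"
      unfolding sorted_wrt_iff_nth_less
    proof (intro allI impI)
      fix i j assume "i < j" "j < length la"
      then show "la ! j \<le> la ! i"
        using h[rule_format, of "i+1" "j+1"] by (simp add: part_def)
    qed
  qed
  have B: "0 \<notin> set la \<longleftrightarrow> (\<forall>r. 1 \<le> r \<longrightarrow> r \<le> length la \<longrightarrow> 0 < part la r)"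
  proof
    assume "0 \<notin> set la"
    then show "\<forall>r. 1 \<le> r \<longrightarrow> r \<le> length la \<longrightarrow> 0 < part la r"
      by (auto simp: part_def in_set_conv_nth)
  next
    assume h: "\<forall>r. 1 \<le> r \<longrightarrow> r \<le> length la \<longrightarrow> 0 < part la r"
    show "0 \<notin> set la"
    proof
      assume "0 \<in> set la"
      then obtain i where "i < length la" "la ! i = 0" by (auto simp: in_set_conv_nth)
      then show False using h[rule_format, of "i+1"] by (simp add: part_def)
    qed
  qed
  show ?thesis unfolding is_partition_def A B ..
qed

lemma part_mono:
  assumes "is_partition la" "1 \<le> i" "i \<le> j"
  shows "part la j \<le> part la i"
proof (cases "j \<le> length la")
  case True then show ?thesis using assms by (auto simp: is_partition_iff_part)
next
  case False then show ?thesis by (simp add: part_gt)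
qed

lemma part_pos:
  assumes "is_partition la" "1 \<le> r" "r \<le> length la"
  shows "0 < part la r"
  using assms by (auto simp: is_partition_iff_part)

lemma part_pos_iff:
  assumes "is_partition la"
  shows "0 < part la r \<longleftrightarrow> 1 \<le> r \<and> r \<le> length la"
  using assms part_pos[OF assms] by (auto simp: part_def)

lemma part_eq_imp_eq:
  assumes "is_partition a" "is_partition b" "\<And>r. part a r = part b r"
  shows "a = b"
proof -
  have "length a = length b"
  proof (rule ccontr)
    assume ne: "length a \<noteq> length b"
    show False
    proof (cases "length a < length b")
      case True
      then have "0 < part b (length b)" using part_pos[OF assms(2)] by simp
      moreover have "part a (length b) = 0" using True by (simp add: part_gt)
      ultimately show False using assms(3) by simp
    next
      case False
      then have "length b < length a" using ne by simp
      then have "0 < part a (length a)" using part_pos[OF assms(1)] by simp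
      moreover have "part b (length a) = 0" using \<open>length b < length a\<close> by (simp add: part_gt)
      ultimately show False using assms(3) by simp
    qed
  qed
  moreover have "a ! i = b ! i" if "i < length a" for i
    using assms(3)[of "i+1"] that \<open>length a = length b\<close> by (simp add: part_def)
  ultimately show ?thesis by (rule nth_equalityI)
qed

lemma cells_iff: "(x, y) \<in> cells la \<longleftrightarrow> 1 \<le> x \<and> 1 \<le> y \<and> x \<le> part la y"
  by (simp add: cells_def)

lemma part_le_sum: "part la r \<le> sum_list la"
  by (auto simp: part_def elem_le_sum_list)

lemma finite_cells[simp]: "finite (cells la)"
proof -
  have "cells la \<subseteq> {..sum_list la} \<times> {..length la}"
  proof
    fix c assume "c \<in> cells la"
    then obtain x y where c: "c = (x, y)" "1 \<le> x" "1 \<le> y" "x \<le> part la y" by (auto simp: cells_def)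
    then have "x \<le> sum_list la" using part_le_sum[of la y] by linarith
    moreover have "y \<le> length la" using c by (auto simp: part_def split: if_splits)
    ultimately show "c \<in> {..sum_list la} \<times> {..length la}" using c by simp
  qed
  then show ?thesis by (rule finite_subset) auto
qed

lemma row_cells: "1 \<le> r \<Longrightarrow> {x. (x, r) \<in> cells la} = {1..part la r}"
  by (auto simp: cells_def)

definition addable :: "nat list \<Rightarrow> nat \<Rightarrow> bool" where
  "addable la y \<longleftrightarrow> 1 \<le> y \<and> y \<le> length la + 1 \<and> (y = 1 \<or> part la y < part la (y - 1))"

definition removable :: "nat list \<Rightarrow> nat \<Rightarrow> bool" where
  "removable la z \<longleftrightarrow> 1 \<le> z \<and> z \<le> length la \<and> part la (z + 1) < part la z"

definition addrow :: "nat list \<Rightarrow> nat \<Rightarrow> nat list" where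
  "addrow la y = (if y \<le> length la then la[y - 1 := la ! (y - 1) + 1] else la @ [1])"

definition delrow :: "nat list \<Rightarrow> nat \<Rightarrow> nat list" where
  "delrow la z = (if part la z = 1 then take (z - 1) la else la[z - 1 := la ! (z - 1) - 1])"

lemma part_addrow:
  assumes "1 \<le> y" "y \<le> length la + 1"
  shows "part (addrow la y) r = part la r + (if r = y then 1 else 0)"
proof (cases "y \<le> length la")
  case True
  then have a: "addrow la y = la[y - 1 := la ! (y - 1) + 1]" by (simp add: addrow_def)
  show ?thesis
  proof (cases "1 \<le> r \<and> r \<le> length la")
    case True
    then have "la[y - 1 := la ! (y - 1) + 1] ! (r - 1) = (if y - 1 = r - 1 then la ! (y - 1) + 1 else la ! (r - 1))"
      using assms \<open>y \<le> length la\<close> by (intro nth_list_update) auto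
    moreover have "(y - 1 = r - 1) = (r = y)" using True assms by auto
    ultimately show ?thesis using True by (simp add: a part_def)
  next
    case False
    then show ?thesis using \<open>y \<le> length la\<close> assms by (auto simp: a part_def)
  qed
next
  case False
  then have y: "y = length la + 1" using assms by simp
  then have a: "addrow la y = la @ [1]" by (simp add: addrow_def)
  show ?thesis
  proof (cases "1 \<le> r \<and> r \<le> length la + 1")
    case True
    then show ?thesis unfolding a using y by (auto simp: part_def nth_append)
  next
    case False
    then show ?thesis unfolding a using y by (auto simp: part_def)
  qed
qed

lemma length_addrow:
  assumes "1 \<le> y" "y \<le> length la + 1"
  shows "length (addrow la y) = max (length la) y"
  using assms by (auto simp: addrow_def)

lemma addrow_partition:
  assumes "is_partition la" "addable la y"
  shows "is_partition (addrow la y)"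
proof -
  have y: "1 \<le> y" "y \<le> length la + 1" using assms(2) by (auto simp: addable_def)
  note P = part_addrow[OF y]
  show ?thesis
    unfolding is_partition_iff_part
  proof (intro conjI allI impI)
    fix i j assume h: "1 \<le> i" "i \<le> j" "j \<le> length (addrow la y)"
    have m: "part la j \<le> part la i" using part_mono[OF assms(1) h(1,2)] .
    show "part (addrow la y) j \<le> part (addrow la y) i"
    proof (cases "j = y \<and> i \<noteq> y")
      case True
      then have "i \<le> y - 1" using h by auto
      then have "part la (y - 1) \<le> part la i" using part_mono[OF assms(1) h(1)] by simp
      moreover have "part la y < part la (y - 1)" using assms(2) True h by (auto simp: addable_def)
      ultimately show ?thesis using True P by simp
    next
      case False
      then show ?thesis using m P by auto
    qed
  next
    fix r assume h: "1 \<le> r" "r \<le> length (addrow la y)"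
    show "0 < part (addrow la y) r"
    proof (cases "r = y")
      case False
      then have "r \<le> length la" using h length_addrow[OF y] y by auto
      then show ?thesis using P part_pos[OF assms(1) h(1)] by simp
    qed (simp add: P)
  qed
qed

lemma cells_addrow:
  assumes "1 \<le> y" "y \<le> length la + 1"
  shows "cells (addrow la y) = insert (part la y + 1, y) (cells la)"
  using assms by (auto simp: cells_def part_addrow)

lemma addrow_new_notin: "(part la y + 1, y) \<notin> cells la"
  by (simp add: cells_def)

lemma addrow_in_Ups:
  assumes "is_partition la" "addable la y"
  shows "addrow la y \<in> Ups la"
proof -
  have y: "1 \<le> y" "y \<le> length la + 1" using assms(2) by (auto simp: addable_def)
  have "cells (addrow la y) - cells la = {(part la y + 1, y)}"
    using cells_addrow[OF y] addrow_new_notin[of la y] by auto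
  then show ?thesis unfolding Ups_def using addrow_partition[OF assms] cells_addrow[OF y] by auto
qed

lemma Ups_imp:
  assumes la: "is_partition la" and nu: "nu \<in> Ups la"
  shows "\<exists>y. addable la y \<and> nu = addrow la y"
proof -
  have nup: "is_partition nu" and sub: "cells la \<subseteq> cells nu" and c1: "card (cells nu - cells la) = 1"
    using nu by (auto simp: Ups_def)
  obtain x0 y0 where d: "cells nu - cells la = {(x0, y0)}" using c1 by (auto simp: card_Suc_eq)
  have cn: "cells nu = insert (x0, y0) (cells la)" and nin: "(x0, y0) \<notin> cells la"
    using d sub by auto
  have xy: "1 \<le> x0" "1 \<le> y0" "x0 \<le> part nu y0" using cn by (auto simp: cells_def)
  have pr: "part nu r = part la r + (if r = y0 then 1 else 0)" for r
  proof (cases "r = 0")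
    case True then show ?thesis using xy by auto
  next
    case False
    then have r1: "1 \<le> r" by simp
    have "{x. (x, r) \<in> cells nu} = (if r = y0 then insert x0 {x. (x, r) \<in> cells la} else {x. (x, r) \<in> cells la})"
      using cn by auto
    then have e: "{1..part nu r} = (if r = y0 then insert x0 {1..part la r} else {1..part la r})"
      unfolding row_cells[OF r1, of nu, symmetric] row_cells[OF r1, of la, symmetric] .
    show ?thesis
    proof (cases "r = y0")
      case True
      have "x0 \<notin> {1..part la r}" using nin True xy by (auto simp: cells_def)
      then have "card {1..part nu r} = card {1..part la r} + 1" using e True by simp
      then show ?thesis using True by simp
    next
      case False
      then have "{1..part nu r} = {1..part la r}" using e by (simp only: if_False)
      then have "card {1..part nu r} = card {1..part la r}" by (rule arg_cong)
      then show ?thesis using False by simp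
    qed
  qed
  have ad: "addable la y0"
  proof -
    have "part nu y0 \<ge> 1" using pr by simp
    have "y0 \<le> length la + 1"
    proof (rule ccontr)
      assume "\<not> ?thesis"
      then have "length la < y0 - 1" "1 \<le> y0 - 1" by auto
      then have "part nu (y0 - 1) = 0" using pr part_gt[of la "y0 - 1"] by auto
      moreover have "part nu y0 \<le> part nu (y0 - 1)" using part_mono[OF nup \<open>1 \<le> y0 - 1\<close>] by simp
      ultimately show False using pr by simp
    qed
    moreover have "y0 = 1 \<or> part la y0 < part la (y0 - 1)"
    proof (cases "y0 = 1")
      case False
      then have "1 \<le> y0 - 1" using xy by simp
      then have "part nu y0 \<le> part nu (y0 - 1)" using part_mono[OF nup] by simp
      then show ?thesis using pr False xy by (simp split: if_splits)
    qed simp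
    ultimately show ?thesis using xy by (simp add: addable_def)
  qed
  have y: "1 \<le> y0" "y0 \<le> length la + 1" using ad by (auto simp: addable_def)
  have "nu = addrow la y0"
    by (rule part_eq_imp_eq[OF nup addrow_partition[OF la ad]]) (simp add: pr part_addrow[OF y])
  then show ?thesis using ad by blast
qed

lemma Ups_eq:
  assumes "is_partition la"
  shows "Ups la = addrow la ` {y. addable la y}"
  using Ups_imp[OF assms] addrow_in_Ups[OF assms] by blast

lemma addrow_inj:
  assumes "addable la y1" "addable la y2" "addrow la y1 = addrow la y2"
  shows "y1 = y2"
proof (rule ccontr)
  assume ne: "y1 \<noteq> y2"
  have "part (addrow la y1) y1 = part (addrow la y2) y1" using assms(3) by simp
  then show False using ne assms(1,2) by (simp add: addable_def part_addrow)
qed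

lemma part_delrow:
  assumes "is_partition la" "removable la z"
  shows "part (delrow la z) r = part la r - (if r = z then 1 else 0)"
proof -
  have z: "1 \<le> z" "z \<le> length la" "part la (z + 1) < part la z" using assms(2) by (auto simp: removable_def)
  show ?thesis
  proof (cases "part la z = 1")
    case True
    have "z = length la"
    proof (rule ccontr)
      assume "z \<noteq> length la"
      then have "z + 1 \<le> length la" using z by simp
      then have "0 < part la (z + 1)" using part_pos[OF assms(1)] by simp
      then show False using z True by simp
    qed
    then show ?thesis using True z by (auto simp: delrow_def part_def min_def)
  next
    case False
    then show ?thesis using z by (auto simp: delrow_def part_def nth_list_update)
  qed
qed

lemma length_delrow_le:
  assumes "is_partition la" "removable la z"
  shows "length (delrow la z) \<le> length la"
  by (simp add: delrow_def)

lemma delrow_partition: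
  assumes la: "is_partition la" and rz: "removable la z"
  shows "is_partition (delrow la z)"
proof -
  have z: "1 \<le> z" "z \<le> length la" "part la (z + 1) < part la z" using rz by (auto simp: removable_def)
  note P = part_delrow[OF la rz]
  have L: "length (delrow la z) \<le> length la" by (simp add: delrow_def)
  show ?thesis
    unfolding is_partition_iff_part
  proof (intro conjI allI impI)
    fix i j assume h: "1 \<le> i" "i \<le> j" "j \<le> length (delrow la z)"
    have m: "part la j \<le> part la i" using part_mono[OF la h(1,2)] .
    show "part (delrow la z) j \<le> part (delrow la z) i"
    proof (cases "i = z \<and> j \<noteq> z")
      case True
      then have "z + 1 \<le> j" using h by auto
      then have "part la j \<le> part la (z + 1)" using part_mono[OF la] by simp
      then show ?thesis using True P z by simp
    next
      case False
      then show ?thesis using m P by auto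
    qed
  next
    fix r assume h: "1 \<le> r" "r \<le> length (delrow la z)"
    have "r \<le> length la" using h L by simp
    have pos: "0 < part la r" using part_pos[OF la h(1) \<open>r \<le> length la\<close>] .
    show "0 < part (delrow la z) r"
    proof (cases "r = z")
      case True
      show ?thesis
      proof (cases "part la z = 1")
        case True
        then have "delrow la z = take (z - 1) la" by (simp add: delrow_def)
        then show ?thesis using h \<open>r = z\<close> z by simp
      next
        case False
        then show ?thesis using P True pos by simp
      qed
    next
      case False then show ?thesis using P pos by simp
    qed
  qed
qed

lemma delrow_addable:
  assumes la: "is_partition la" and rz: "removable la z"
  shows "addable (delrow la z) z"
proof -
  have z: "1 \<le> z" "z \<le> length la" "part la (z + 1) < part la z" using rz by (auto simp: removable_def)
  note P = part_delrow[OF la rz]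
  have "z \<le> length (delrow la z) + 1"
  proof (rule ccontr)
    assume "\<not> ?thesis"
    then have "z - 1 > length (delrow la z)" "1 \<le> z - 1" by auto
    then have "part (delrow la z) (z - 1) = 0" by (simp add: part_gt)
    moreover have "part la z \<le> part la (z - 1)" using part_mono[OF la \<open>1 \<le> z - 1\<close>] by simp
    moreover have "z - 1 \<noteq> z" using z by simp
    ultimately show False using P[of "z - 1"] z by simp
  qed
  moreover have "z = 1 \<or> part (delrow la z) z < part (delrow la z) (z - 1)"
  proof (cases "z = 1")
    case False
    then have "1 \<le> z - 1" using z by simp
    then have "part la z \<le> part la (z - 1)" using part_mono[OF la] by simp
    moreover have "z - 1 \<noteq> z" "part la z \<ge> 1" using z by auto
    ultimately show ?thesis using P[of z] P[of "z - 1"] using False by simp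
  qed simp
  ultimately show ?thesis using z by (simp add: addable_def)
qed

lemma addrow_delrow:
  assumes la: "is_partition la" and rz: "removable la z"
  shows "addrow (delrow la z) z = la"
proof -
  have ad: "addable (delrow la z) z" by (rule delrow_addable[OF la rz])
  have y: "1 \<le> z" "z \<le> length (delrow la z) + 1" using ad by (auto simp: addable_def)
  have z: "part la (z + 1) < part la z" using rz by (auto simp: removable_def)
  show ?thesis
    by (rule part_eq_imp_eq[OF addrow_partition[OF delrow_partition[OF la rz] ad] la])
       (use z in \<open>simp add: part_addrow[OF y] part_delrow[OF la rz]\<close>)
qed

lemma Downs_eq:
  assumes la: "is_partition la"
  shows "Downs la = delrow la ` {z. removable la z}"
proof
  show "Downs la \<subseteq> delrow la ` {z. removable la z}"
  proof
    fix mu assume "mu \<in> Downs la"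
    then have mup: "is_partition mu" and "la \<in> Ups mu" using la by (auto simp: Downs_def Ups_def)
    then obtain z where ad: "addable mu z" and e: "la = addrow mu z" using Ups_imp by blast
    have y: "1 \<le> z" "z \<le> length mu + 1" using ad by (auto simp: addable_def)
    have pl: "part la r = part mu r + (if r = z then 1 else 0)" for r using e part_addrow[OF y] by simp
    have rz: "removable la z"
    proof -
      have "part la z \<ge> 1" using pl by simp
      then have "z \<le> length la" using part_pos_iff[OF la, of z] by simp
      moreover have "part mu (z + 1) \<le> part mu z" using part_mono[OF mup y(1)] by simp
      ultimately show ?thesis using pl y by (simp add: removable_def)
    qed
    have "mu = delrow la z"
      by (rule part_eq_imp_eq[OF mup delrow_partition[OF la rz]]) (simp add: part_delrow[OF la rz] pl)
    then show "mu \<in> delrow la ` {z. removable la z}" using rz by blast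
  qed
next
  show "delrow la ` {z. removable la z} \<subseteq> Downs la"
  proof
    fix mu assume "mu \<in> delrow la ` {z. removable la z}"
    then obtain z where rz: "removable la z" and e: "mu = delrow la z" by blast
    have "addrow mu z \<in> Ups mu"
      using addrow_in_Ups[OF delrow_partition[OF la rz] delrow_addable[OF la rz]] e by simp
    then have "la \<in> Ups mu" using addrow_delrow[OF la rz] e by simp
    then show "mu \<in> Downs la" using delrow_partition[OF la rz] e by (auto simp: Downs_def Ups_def)
  qed
qed

lemma delrow_inj:
  assumes la: "is_partition la" "removable la z1" "removable la z2" "delrow la z1 = delrow la z2"
  shows "z1 = z2"
proof (rule ccontr)
  assume ne: "z1 \<noteq> z2"
  have "part (delrow la z1) z1 = part (delrow la z2) z1" using assms(4) by simp
  moreover have "part la z1 \<ge> 1" using assms(2) by (simp add: removable_def)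
  ultimately show False using ne by (simp add: part_delrow[OF la(1) assms(2)] part_delrow[OF la(1) assms(3)])
qed

definition gen :: "real \<Rightarrow> real \<Rightarrow> bool" where
  "gen q t \<longleftrightarrow> (\<forall>i j :: int. (i, j) \<noteq> (0, 0) \<longrightarrow> q powi i * t powi j \<noteq> 1)"

lemma br_nz: "gen q t \<Longrightarrow> (i, j) \<noteq> (0, 0) \<Longrightarrow> br q t i j \<noteq> 0"
  by (auto simp: gen_def br_def)

lemma conj_eq:
  assumes la: "is_partition la" and x: "1 \<le> x" and r: "r = 0 \<or> x \<le> part la r" and r1: "part la (r + 1) < x"
  shows "conj la x = r"
proof -
  have "{y. 1 \<le> y \<and> x \<le> part la y} = {1..r}"
  proof (intro set_eqI iffI)
    fix y assume h: "y \<in> {y. 1 \<le> y \<and> x \<le> part la y}"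
    have "y \<le> r"
    proof (rule ccontr)
      assume "\<not> y \<le> r"
      then have "part la y \<le> part la (r + 1)" using part_mono[OF la, of "r+1" y] by simp
      then show False using h r1 by simp
    qed
    then show "y \<in> {1..r}" using h by simp
  next
    fix y assume h: "y \<in> {1..r}"
    then have "r \<noteq> 0" by simp
    then have "x \<le> part la r" using r by simp
    moreover have "part la r \<le> part la y" using part_mono[OF la, of y r] h by simp
    ultimately show "y \<in> {y. 1 \<le> y \<and> x \<le> part la y}" using h by simp
  qed
  then show ?thesis by (simp add: conj_def)
qed

lemma prod_group:
  assumes la: "is_partition la" and N: "length la \<le> N" and y: "1 \<le> y" "y \<le> N + 1"
  shows "(\<Prod>x\<in>{1..part la y}. F x (conj la x)) =
         (\<Prod>r\<in>{y..N}. \<Prod>x\<in>{part la (r + 1) + 1..part la r}. F x r)"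
  using y
proof (induction "N + 1 - y" arbitrary: y)
  case 0
  then have "y = N + 1" by simp
  then have "part la y = 0" using N by (simp add: part_gt)
  then show ?case using \<open>y = N + 1\<close> by simp
next
  case (Suc m)
  then have yN: "y \<le> N" and m: "m = N + 1 - (y + 1)" by auto
  have IH: "(\<Prod>x\<in>{1..part la (y+1)}. F x (conj la x)) =
         (\<Prod>r\<in>{y+1..N}. \<Prod>x\<in>{part la (r + 1) + 1..part la r}. F x r)"
    using Suc.hyps(1)[OF m] yN by simp
  have mono: "part la (y + 1) \<le> part la y" using part_mono[OF la Suc.prems(1)] by simp
  have split: "{1..part la y} = {1..part la (y+1)} \<union> {part la (y + 1) + 1..part la y}" using mono by auto
  have cj: "conj la x = y" if "x \<in> {part la (y + 1) + 1..part la y}" for x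
    using that by (intro conj_eq[OF la]) auto
  have "(\<Prod>x\<in>{1..part la y}. F x (conj la x)) =
        (\<Prod>x\<in>{1..part la (y+1)}. F x (conj la x)) * (\<Prod>x\<in>{part la (y + 1) + 1..part la y}. F x (conj la x))"
    unfolding split by (rule prod.union_disjoint) auto
  also have "(\<Prod>x\<in>{part la (y + 1) + 1..part la y}. F x (conj la x)) = (\<Prod>x\<in>{part la (y + 1) + 1..part la y}. F x y)"
    by (rule prod.cong) (auto simp: cj)
  also have "{y..N} = insert y {y+1..N}" using yN by auto
  then have "(\<Prod>r\<in>{y..N}. \<Prod>x\<in>{part la (r + 1) + 1..part la r}. F x r) =
      (\<Prod>x\<in>{part la (y + 1) + 1..part la y}. F x y) * (\<Prod>r\<in>{y+1..N}. \<Prod>x\<in>{part la (r + 1) + 1..part la r}. F x r)"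
    by simp
  ultimately show ?case using IH by (simp add: ac_simps)
qed

lemma prod_telescope:
  fixes G :: "nat \<Rightarrow> real"
  assumes "a \<le> b" "\<And>x. a + 1 \<le> x \<Longrightarrow> x \<le> b + 1 \<Longrightarrow> G x \<noteq> 0"
  shows "(\<Prod>x\<in>{a+1..b}. G (x + 1) / G x) = G (b + 1) / G (a + 1)"
  using assms
proof (induction b)
  case 0 then show ?case by simp
next
  case (Suc b)
  show ?case
  proof (cases "a = Suc b")
    case True then show ?thesis using Suc.prems by simp
  next
    case False
    then have ab: "a \<le> b" using Suc.prems by simp
    have "{a+1..Suc b} = insert (Suc b) {a+1..b}" using ab by auto
    then have "(\<Prod>x\<in>{a+1..Suc b}. G (x + 1) / G x) = G (Suc b + 1) / G (Suc b) * (\<Prod>x\<in>{a+1..b}. G (x + 1) / G x)"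
      by simp
    also have "(\<Prod>x\<in>{a+1..b}. G (x + 1) / G x) = G (b + 1) / G (a + 1)"
      using Suc.IH[OF ab] Suc.prems by simp
    also have "G (Suc b + 1) / G (Suc b) * (G (b + 1) / G (a + 1)) = G (Suc b + 1) / G (a + 1)"
      using Suc.prems(2)[of "Suc b"] ab by simp
    finally show ?thesis .
  qed
qed

context
  fixes ka :: "nat list" and y :: nat
  assumes ka: "is_partition ka" and ad: "addable ka y"
begin

private lemma y1: "1 \<le> y" "y \<le> length ka + 1" using ad by (auto simp: addable_def)

lemma part_rho: "part (addrow ka y) r = part ka r + (if r = y then 1 else 0)"
  by (rule part_addrow[OF y1])

lemma rho_part: "is_partition (addrow ka y)" by (rule addrow_partition[OF ka ad])

lemma diff_cells: "cells (addrow ka y) - cells ka = {(part ka y + 1, y)}"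
  using cells_addrow[OF y1] addrow_new_notin[of ka y] by auto

lemma Rset_eq: "Rset (addrow ka y) ka = (\<lambda>x. (x, y)) ` {1..part ka y}"
  unfolding Rset_def diff_cells using y1 by (auto simp: cells_def)

lemma col_in: "(part ka y + 1, y') \<in> cells ka \<longleftrightarrow> 1 \<le> y' \<and> y' < y"
proof
  assume "(part ka y + 1, y') \<in> cells ka"
  then have h: "1 \<le> y'" "part ka y + 1 \<le> part ka y'" by (auto simp: cells_def)
  have "y' < y"
  proof (rule ccontr)
    assume "\<not> y' < y"
    then have "part ka y' \<le> part ka y" using part_mono[OF ka y1(1)] by simp
    then show False using h by simp
  qed
  then show "1 \<le> y' \<and> y' < y" using h by simp
next
  assume h: "1 \<le> y' \<and> y' < y"
  then have "y \<noteq> 1" by simp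
  then have "part ka y < part ka (y - 1)" using ad by (simp add: addable_def)
  moreover have "y' \<le> y - 1" using h by arith
  then have "part ka (y - 1) \<le> part ka y'" using part_mono[OF ka, of y' "y - 1"] h by simp
  ultimately show "(part ka y + 1, y') \<in> cells ka" using h by (simp add: cells_def)
qed

lemma Cset_eq: "Cset (addrow ka y) ka = (\<lambda>y'. (part ka y + 1, y')) ` {1..<y}"
proof -
  have "Cset (addrow ka y) ka = {c \<in> cells ka. fst c = part ka y + 1}"
    unfolding Cset_def diff_cells by auto
  also have "\<dots> = (\<lambda>y'. (part ka y + 1, y')) ` {1..<y}"
  proof (intro set_eqI)
    fix c :: "nat \<times> nat"
    obtain a b where c: "c = (a, b)" by fastforce
    show "c \<in> {c \<in> cells ka. fst c = part ka y + 1} \<longleftrightarrow> c \<in> (\<lambda>y'. (part ka y + 1, y')) ` {1..<y}"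
      unfolding c using col_in[of b] by auto
  qed
  finally show ?thesis .
qed

lemma conj_rho_other: "x \<noteq> part ka y + 1 \<Longrightarrow> conj (addrow ka y) x = conj ka x"
  unfolding conj_def part_rho by (rule arg_cong[where f = card]) auto

lemma conj_ka_new: "conj ka (part ka y + 1) = y - 1"
proof (rule conj_eq[OF ka])
  show "y - 1 = 0 \<or> part ka y + 1 \<le> part ka (y - 1)"
    using ad by (auto simp: addable_def)
  show "part ka (y - 1 + 1) < part ka y + 1" using y1 by simp
qed simp

lemma conj_rho_new: "conj (addrow ka y) (part ka y + 1) = y"
proof (rule conj_eq[OF rho_part])
  show "y = 0 \<or> part ka y + 1 \<le> part (addrow ka y) y" by (simp add: part_rho)
  have "part ka (y + 1) \<le> part ka y" using part_mono[OF ka y1(1)] by simp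
  then show "part (addrow ka y) (y + 1) < part ka y + 1" by (simp add: part_rho)
qed simp

lemma alpha_raw:
  assumes g: "gen q t" and N: "length ka \<le> N"
  shows "alpha q t (addrow ka y) ka =
    (\<Prod>r\<in>{y..N}. br q t (int (part ka y) - int (part ka r)) (int r - int y + 1) /
                    br q t (int (part ka y) - int (part ka (r+1))) (int r - int y + 1)) *
    (\<Prod>r\<in>{1..<y}. br q t (int (part ka r) - int (part ka y)) (int y - 1 - int r) /
                    br q t (int (part ka r) - int (part ka y)) (int y - int r))"
proof -
  define k where "k = part ka y"
  define F where "F x r = br q t (int k - int x) (int r - int y + 1) / br q t (int k + 1 - int x) (int r - int y + 1)" for x r :: nat
  have row1: "(\<Prod>c\<in>Rset (addrow ka y) ka. br q t (arm ka c) (leg ka c + 1) / br q t (arm (addrow ka y) c) (leg (addrow ka y) c + 1))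
      = (\<Prod>x\<in>{1..k}. F x (conj ka x))"
    unfolding Rset_eq k_def[symmetric]
  proof (subst prod.reindex)
    show "inj_on (\<lambda>x. (x, y)) {1..k}" by (auto simp: inj_on_def)
    show "(\<Prod>x\<in>{1..k}. ((\<lambda>c. br q t (arm ka c) (leg ka c + 1) / br q t (arm (addrow ka y) c) (leg (addrow ka y) c + 1)) \<circ> (\<lambda>x. (x, y))) x) =
          (\<Prod>x\<in>{1..k}. F x (conj ka x))"
    proof (rule prod.cong)
      fix x assume x: "x \<in> {1..k}"
      then have "x \<noteq> part ka y + 1" using k_def by simp
      then have c: "conj (addrow ka y) x = conj ka x" by (rule conj_rho_other)
      show "((\<lambda>c. br q t (arm ka c) (leg ka c + 1) / br q t (arm (addrow ka y) c) (leg (addrow ka y) c + 1)) \<circ> (\<lambda>x. (x, y))) x = F x (conj ka x)"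
        by (simp add: F_def arm_def leg_def c part_rho k_def algebra_simps)
    qed simp
  qed
  have yN: "y \<le> N + 1" using y1 N by simp
  have row2: "(\<Prod>x\<in>{1..k}. F x (conj ka x)) = (\<Prod>r\<in>{y..N}. \<Prod>x\<in>{part ka (r + 1) + 1..part ka r}. F x r)"
    unfolding k_def by (rule prod_group[OF ka N y1(1) yN])
  have row3: "(\<Prod>x\<in>{part ka (r + 1) + 1..part ka r}. F x r) =
      br q t (int k - int (part ka r)) (int r - int y + 1) / br q t (int k - int (part ka (r+1))) (int r - int y + 1)"
    if r: "r \<in> {y..N}" for r
  proof -
    define G where "G x = br q t (int k + 1 - int x) (int r - int y + 1)" for x :: nat
    have FG: "F x r = G (x + 1) / G x" for x by (simp add: F_def G_def algebra_simps)
    have ab: "part ka (r + 1) \<le> part ka r" using part_mono[OF ka, of r "r+1"] r y1 by simp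
    have "(\<Prod>x\<in>{part ka (r + 1) + 1..part ka r}. F x r) = (\<Prod>x\<in>{part ka (r + 1) + 1..part ka r}. G (x + 1) / G x)"
      by (simp add: FG)
    also have "\<dots> = G (part ka r + 1) / G (part ka (r + 1) + 1)"
    proof (rule prod_telescope[OF ab])
      fix x show "G x \<noteq> 0" unfolding G_def using r by (intro br_nz[OF g]) auto
    qed
    also have "\<dots> = br q t (int k - int (part ka r)) (int r - int y + 1) / br q t (int k - int (part ka (r+1))) (int r - int y + 1)"
      by (simp add: G_def algebra_simps)
    finally show ?thesis .
  qed
  have col: "(\<Prod>c\<in>Cset (addrow ka y) ka. br q t (arm ka c + 1) (leg ka c) / br q t (arm (addrow ka y) c + 1) (leg (addrow ka y) c)) =
    (\<Prod>r\<in>{1..<y}. br q t (int (part ka r) - int (part ka y)) (int y - 1 - int r) /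
                    br q t (int (part ka r) - int (part ka y)) (int y - int r))"
    unfolding Cset_eq
  proof (subst prod.reindex)
    show "inj_on (\<lambda>y'. (part ka y + 1, y')) {1..<y}" by (auto simp: inj_on_def)
    show "(\<Prod>x\<in>{1..<y}. ((\<lambda>c. br q t (arm ka c + 1) (leg ka c) / br q t (arm (addrow ka y) c + 1) (leg (addrow ka y) c)) \<circ> (\<lambda>y'. (part ka y + 1, y'))) x) =
      (\<Prod>r\<in>{1..<y}. br q t (int (part ka r) - int (part ka y)) (int y - 1 - int r) /
                    br q t (int (part ka r) - int (part ka y)) (int y - int r))"
    proof (rule prod.cong)
      fix x assume x: "x \<in> {1..<y}"
      have iy: "int (y - 1) = int y - 1" using y1 by simp
      show "((\<lambda>c. br q t (arm ka c + 1) (leg ka c) / br q t (arm (addrow ka y) c + 1) (leg (addrow ka y) c)) \<circ> (\<lambda>y'. (part ka y + 1, y'))) x =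
        br q t (int (part ka x) - int (part ka y)) (int y - 1 - int x) /
                    br q t (int (part ka x) - int (part ka y)) (int y - int x)"
        using x by (simp add: arm_def leg_def conj_ka_new[simplified] conj_rho_new[simplified] part_rho iy algebra_simps)
    qed simp
  qed
  show ?thesis
    unfolding alpha_def row1 row2 col k_def[symmetric]
    using row3 by (simp add: k_def)
qed

lemma alphabar_raw:
  assumes g: "gen q t" and N: "length ka \<le> N"
  shows "alphabar q t (addrow ka y) ka =
    (\<Prod>r\<in>{y..N}. br q t (int (part ka y) + 1 - int (part ka r)) (int r - int y) /
                    br q t (int (part ka y) + 1 - int (part ka (r+1))) (int r - int y)) *
    (\<Prod>r\<in>{1..<y}. br q t (int (part ka r) - int (part ka y) - 1) (int y - int r) /
                    br q t (int (part ka r) - int (part ka y) - 1) (int y - int r + 1))"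
proof -
  define k where "k = part ka y"
  define F where "F x r = br q t (int k - int x + 1) (int r - int y) / br q t (int k + 2 - int x) (int r - int y)" for x r :: nat
  have row1: "(\<Prod>c\<in>Rset (addrow ka y) ka. br q t (arm ka c + 1) (leg ka c) / br q t (arm (addrow ka y) c + 1) (leg (addrow ka y) c))
      = (\<Prod>x\<in>{1..k}. F x (conj ka x))"
    unfolding Rset_eq k_def[symmetric]
  proof (subst prod.reindex)
    show "inj_on (\<lambda>x. (x, y)) {1..k}" by (auto simp: inj_on_def)
    show "(\<Prod>x\<in>{1..k}. ((\<lambda>c. br q t (arm ka c + 1) (leg ka c) / br q t (arm (addrow ka y) c + 1) (leg (addrow ka y) c)) \<circ> (\<lambda>x. (x, y))) x) =
          (\<Prod>x\<in>{1..k}. F x (conj ka x))"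
    proof (rule prod.cong)
      fix x assume x: "x \<in> {1..k}"
      then have "x \<noteq> part ka y + 1" using k_def by simp
      then have c: "conj (addrow ka y) x = conj ka x" by (rule conj_rho_other)
      show "((\<lambda>c. br q t (arm ka c + 1) (leg ka c) / br q t (arm (addrow ka y) c + 1) (leg (addrow ka y) c)) \<circ> (\<lambda>x. (x, y))) x = F x (conj ka x)"
        by (simp add: F_def arm_def leg_def c part_rho k_def algebra_simps)
    qed simp
  qed
  have yN: "y \<le> N + 1" using y1 N by simp
  have row2: "(\<Prod>x\<in>{1..k}. F x (conj ka x)) = (\<Prod>r\<in>{y..N}. \<Prod>x\<in>{part ka (r + 1) + 1..part ka r}. F x r)"
    unfolding k_def by (rule prod_group[OF ka N y1(1) yN])
  have row3: "(\<Prod>x\<in>{part ka (r + 1) + 1..part ka r}. F x r) =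
      br q t (int k + 1 - int (part ka r)) (int r - int y) / br q t (int k + 1 - int (part ka (r+1))) (int r - int y)"
    if r: "r \<in> {y..N}" for r
  proof -
    define G where "G x = br q t (int k + 2 - int x) (int r - int y)" for x :: nat
    have FG: "F x r = G (x + 1) / G x" for x by (simp add: F_def G_def algebra_simps)
    have ab: "part ka (r + 1) \<le> part ka r" using part_mono[OF ka, of r "r+1"] r y1 by simp
    have rk: "part ka r \<le> k" using part_mono[OF ka, of y r] r y1 k_def by simp
    have "(\<Prod>x\<in>{part ka (r + 1) + 1..part ka r}. F x r) = (\<Prod>x\<in>{part ka (r + 1) + 1..part ka r}. G (x + 1) / G x)"
      by (simp add: FG)
    also have "\<dots> = G (part ka r + 1) / G (part ka (r + 1) + 1)"
    proof (rule prod_telescope[OF ab])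
      fix x assume "x \<le> part ka r + 1"
      then show "G x \<noteq> 0" unfolding G_def using rk by (intro br_nz[OF g]) auto
    qed
    also have "\<dots> = br q t (int k + 1 - int (part ka r)) (int r - int y) / br q t (int k + 1 - int (part ka (r+1))) (int r - int y)"
      by (simp add: G_def algebra_simps)
    finally show ?thesis .
  qed
  have col: "(\<Prod>c\<in>Cset (addrow ka y) ka. br q t (arm ka c) (leg ka c + 1) / br q t (arm (addrow ka y) c) (leg (addrow ka y) c + 1)) =
    (\<Prod>r\<in>{1..<y}. br q t (int (part ka r) - int (part ka y) - 1) (int y - int r) /
                    br q t (int (part ka r) - int (part ka y) - 1) (int y - int r + 1))"
    unfolding Cset_eq
  proof (subst prod.reindex)
    show "inj_on (\<lambda>y'. (part ka y + 1, y')) {1..<y}" by (auto simp: inj_on_def)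
    show "(\<Prod>x\<in>{1..<y}. ((\<lambda>c. br q t (arm ka c) (leg ka c + 1) / br q t (arm (addrow ka y) c) (leg (addrow ka y) c + 1)) \<circ> (\<lambda>y'. (part ka y + 1, y'))) x) =
      (\<Prod>r\<in>{1..<y}. br q t (int (part ka r) - int (part ka y) - 1) (int y - int r) /
                    br q t (int (part ka r) - int (part ka y) - 1) (int y - int r + 1))"
    proof (rule prod.cong)
      fix x assume x: "x \<in> {1..<y}"
      have iy: "int (y - 1) = int y - 1" using y1 by simp
      show "((\<lambda>c. br q t (arm ka c) (leg ka c + 1) / br q t (arm (addrow ka y) c) (leg (addrow ka y) c + 1)) \<circ> (\<lambda>y'. (part ka y + 1, y'))) x =
        br q t (int (part ka x) - int (part ka y) - 1) (int y - int x) /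
                    br q t (int (part ka x) - int (part ka y) - 1) (int y - int x + 1)"
        using x by (simp add: arm_def leg_def conj_ka_new[simplified] conj_rho_new[simplified] part_rho iy algebra_simps)
    qed simp
  qed
  show ?thesis
    unfolding alphabar_def row1 row2 col k_def[symmetric]
    using row3 by (simp add: k_def)
qed

lemma nfun_addrow: "nfun (addrow ka y) = nfun ka + (int y - 1)"
proof -
  define k where "k = part ka y"
  have cr: "cells (addrow ka y) = insert (k + 1, y) (cells ka)" and nin: "(k + 1, y) \<notin> cells ka"
    using cells_addrow[OF y1] addrow_new_notin[of ka y] k_def by auto
  have l0: "leg (addrow ka y) (k + 1, y) = 0" using conj_rho_new k_def by (simp add: leg_def)
  have lc: "leg (addrow ka y) c = leg ka c + of_bool (fst c = k + 1)" if "c \<in> cells ka" for c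
  proof (cases "fst c = k + 1")
    case True
    then show ?thesis using conj_rho_new conj_ka_new k_def y1 by (simp add: leg_def)
  next
    case False
    then show ?thesis using conj_rho_other k_def by (simp add: leg_def)
  qed
  have ce: "cells ka \<inter> {c. fst c = k + 1} = (\<lambda>y'. (k + 1, y')) ` {1..<y}"
  proof (intro set_eqI)
    fix c :: "nat \<times> nat"
    obtain a b where c: "c = (a, b)" by fastforce
    show "c \<in> cells ka \<inter> {c. fst c = k + 1} \<longleftrightarrow> c \<in> (\<lambda>y'. (k + 1, y')) ` {1..<y}"
      unfolding c using col_in[of b] k_def by auto
  qed
  have cc: "card (cells ka \<inter> {c. fst c = k + 1}) = y - 1"
    unfolding ce by (subst card_image) (auto simp: inj_on_def)
  have "nfun (addrow ka y) = leg (addrow ka y) (k + 1, y) + (\<Sum>c\<in>cells ka. leg (addrow ka y) c)"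
    unfolding nfun_def cr using nin by simp
  also have "(\<Sum>c\<in>cells ka. leg (addrow ka y) c) = (\<Sum>c\<in>cells ka. leg ka c + of_bool (fst c = k + 1))"
    by (rule sum.cong) (auto simp: lc)
  also have "\<dots> = nfun ka + int (y - 1)"
    by (simp add: sum.distrib nfun_def cc[simplified])
  finally show ?thesis using l0 y1 by simp
qed

lemma nfun'_addrow: "nfun' (addrow ka y) = nfun' ka + int (part ka y)"
proof -
  define k where "k = part ka y"
  have cr: "cells (addrow ka y) = insert (k + 1, y) (cells ka)" and nin: "(k + 1, y) \<notin> cells ka"
    using cells_addrow[OF y1] addrow_new_notin[of ka y] k_def by auto
  have l0: "arm (addrow ka y) (k + 1, y) = 0" using k_def by (simp add: arm_def part_rho)
  have lc: "arm (addrow ka y) c = arm ka c + of_bool (snd c = y)" if "c \<in> cells ka" for c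
    by (simp add: arm_def part_rho)
  have ce: "cells ka \<inter> {c. snd c = y} = (\<lambda>x. (x, y)) ` {1..k}"
    using y1 k_def by (auto simp: cells_def)
  have cc: "card (cells ka \<inter> {c. snd c = y}) = k"
    unfolding ce by (subst card_image) (auto simp: inj_on_def)
  have "nfun' (addrow ka y) = arm (addrow ka y) (k + 1, y) + (\<Sum>c\<in>cells ka. arm (addrow ka y) c)"
    unfolding nfun'_def cr using nin by simp
  also have "(\<Sum>c\<in>cells ka. arm (addrow ka y) c) = (\<Sum>c\<in>cells ka. arm ka c + of_bool (snd c = y))"
    by (rule sum.cong) (auto simp: lc)
  also have "\<dots> = nfun' ka + int k"
    by (simp add: sum.distrib nfun'_def cc)
  finally show ?thesis using l0 k_def by simp
qed

end

lemma prodG: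
  fixes U A B :: "nat \<Rightarrow> real"
  assumes U: "\<forall>r\<in>{1..N+1}. U r \<noteq> 0" and s: "s \<noteq> 0" and y: "1 \<le> y" "y \<le> N+1"
    and B: "\<forall>r\<in>{1..N+1}-{y}. B r \<noteq> 0"
  shows "(\<Prod>r\<in>{y..N}. (A r / U r) / (B (r+1) / (s * U (r+1)))) * (\<Prod>r\<in>{1..<y}. A r / B r)
       = s ^ (N + 1 - y) * (U (N+1) / U y) * (\<Prod>r\<in>{1..N}. A r) / (\<Prod>r\<in>{1..N+1}-{y}. B r)"
  using U y B
proof (induction N)
  case 0
  then have "y = 1" by simp
  then show ?case using 0 by simp
next
  case (Suc N)
  show ?case
  proof (cases "y = Suc N + 1")
    case True
    have e: "{1..Suc N + 1} - {y} = {1..<y}" using True by auto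
    have e2: "{1..Suc N} = {1..<y}" using True by auto
    show ?thesis unfolding e e2 using True Suc.prems by (simp add: prod_dividef)
  next
    case False
    then have yN: "y \<le> N + 1" using Suc.prems by simp
    have IH: "(\<Prod>r\<in>{y..N}. (A r / U r) / (B (r+1) / (s * U (r+1)))) * (\<Prod>r\<in>{1..<y}. A r / B r)
       = s ^ (N + 1 - y) * (U (N+1) / U y) * (\<Prod>r\<in>{1..N}. A r) / (\<Prod>r\<in>{1..N+1}-{y}. B r)"
      using Suc.IH Suc.prems yN by auto
    have e1: "{y..Suc N} = insert (Suc N) {y..N}" using yN by auto
    have e2: "{1..Suc N} = insert (Suc N) {1..N}" by auto
    have e3: "{1..Suc N + 1} - {y} = insert (Suc N + 1) ({1..N+1}-{y})" using yN by auto
    have nzB: "(\<Prod>r\<in>{1..N+1}-{y}. B r) \<noteq> 0" using Suc.prems(4) by (subst prod_zero_iff) auto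
    have nzB2: "B (Suc N + 1) \<noteq> 0" using Suc.prems(4) yN by auto
    have nzU1: "U (Suc N) \<noteq> 0" using Suc.prems(1) by auto
    have nzU2: "U (Suc N + 1) \<noteq> 0" using Suc.prems(1) by auto
    have nzUy: "U y \<noteq> 0" using Suc.prems(1) Suc.prems(2,3) by auto
    have pw: "s ^ (Suc N + 1 - y) = s * s ^ (N + 1 - y)" using yN by (simp add: Suc_diff_le)
    have "(\<Prod>r\<in>{y..Suc N}. (A r / U r) / (B (r+1) / (s * U (r+1)))) * (\<Prod>r\<in>{1..<y}. A r / B r)
        = ((A (Suc N) / U (Suc N)) / (B (Suc N + 1) / (s * U (Suc N + 1)))) *
          ((\<Prod>r\<in>{y..N}. (A r / U r) / (B (r+1) / (s * U (r+1)))) * (\<Prod>r\<in>{1..<y}. A r / B r))"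
      unfolding e1 by simp
    also have "\<dots> = ((A (Suc N) / U (Suc N)) / (B (Suc N + 1) / (s * U (Suc N + 1)))) *
        (s ^ (N + 1 - y) * (U (N+1) / U y) * (\<Prod>r\<in>{1..N}. A r) / (\<Prod>r\<in>{1..N+1}-{y}. B r))"
      by (simp only: IH)
    also have "\<dots> = s ^ (Suc N + 1 - y) * (U (Suc N + 1) / U y) * (\<Prod>r\<in>{1..Suc N}. A r) / (\<Prod>r\<in>{1..Suc N+1}-{y}. B r)"
      unfolding e2 e3 pw using nzB nzB2 nzU1 nzU2 nzUy s by (simp add: field_simps)
    finally show ?thesis .
  qed
qed

lemma prod_flip:
  fixes v :: real
  shows "(\<Prod>v'\<in>A. (v' - v)) = (-1) ^ card A * (\<Prod>v'\<in>A. (v - v'))"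
proof -
  have "(\<Prod>v'\<in>A. (v' - v)) = (\<Prod>v'\<in>A. (-1) * (v - v'))" by (rule prod.cong) auto
  also have "\<dots> = (-1) ^ card A * (\<Prod>v'\<in>A. (v - v'))" by (simp only: prod.distrib prod_constant)
  finally show ?thesis .
qed

lemma DD':
  fixes S :: "real set" and p :: "real poly"
  assumes fin: "finite S" and deg: "degree p + 1 < card S"
  shows "(\<Sum>v\<in>S. poly p v / (\<Prod>v'\<in>S-{v}. (v' - v))) = 0"
proof -
  have "(\<Sum>v\<in>S. poly p v / (\<Prod>v'\<in>S-{v}. (v' - v))) = (\<Sum>v\<in>S. poly p v / (\<Prod>v'\<in>S-{v}. (v - v')) / (-1) ^ (card S - 1))"
  proof (rule sum.cong)
    fix v assume v: "v \<in> S"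
    have "card (S - {v}) = card S - 1" using v fin by simp
    then show "poly p v / (\<Prod>v'\<in>S-{v}. (v' - v)) = poly p v / (\<Prod>v'\<in>S-{v}. (v - v')) / (-1) ^ (card S - 1)"
      by (simp add: prod_flip[of v] mult.commute)
  qed simp
  also have "\<dots> = (\<Sum>v\<in>S. poly p v / (\<Prod>v'\<in>S-{v}. (v - v'))) / (-1) ^ (card S - 1)"
    by (simp add: sum_divide_distrib)
  also have "\<dots> = 0" using DD[OF fin deg] by simp
  finally show ?thesis .
qed

lemma DD_nodes:
  fixes g :: "nat \<Rightarrow> real" and X :: "real set" and I :: "nat set" and p :: "real poly"
  assumes I: "finite I" and X: "finite X" and inj: "inj_on g I" and disj: "X \<inter> g ` I = {}"
    and deg: "degree p + 1 < card I + card X"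
  shows "(\<Sum>i\<in>I. poly p (g i) / ((\<Prod>x\<in>X. (x - g i)) * (\<Prod>j\<in>I-{i}. (g j - g i))))
       + (\<Sum>x\<in>X. poly p x / ((\<Prod>x'\<in>X-{x}. (x' - x)) * (\<Prod>j\<in>I. (g j - x)))) = 0"
proof -
  define S where "S = g ` I \<union> X"
  have finS: "finite S" using I X S_def by simp
  have cS: "card S = card I + card X"
    unfolding S_def using disj I X by (subst card_Un_disjoint) (auto simp: card_image[OF inj])
  have D: "(\<Sum>v\<in>S. poly p v / (\<Prod>v'\<in>S-{v}. (v' - v))) = 0"
    by (rule DD'[OF finS]) (use deg cS in simp)
  have "(\<Sum>v\<in>S. poly p v / (\<Prod>v'\<in>S-{v}. (v' - v))) =
      (\<Sum>v\<in>g ` I. poly p v / (\<Prod>v'\<in>S-{v}. (v' - v))) + (\<Sum>v\<in>X. poly p v / (\<Prod>v'\<in>S-{v}. (v' - v)))"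
    unfolding S_def by (rule sum.union_disjoint) (use I X disj in auto)
  also have "(\<Sum>v\<in>g ` I. poly p v / (\<Prod>v'\<in>S-{v}. (v' - v))) =
      (\<Sum>i\<in>I. poly p (g i) / ((\<Prod>x\<in>X. (x - g i)) * (\<Prod>j\<in>I-{i}. (g j - g i))))"
  proof (subst sum.reindex[OF inj], rule sum.cong)
    fix i assume i: "i \<in> I"
    have e: "S - {g i} = g ` (I - {i}) \<union> X" unfolding S_def using i inj disj by (auto simp: inj_on_def)
    have "(\<Prod>v'\<in>S-{g i}. (v' - g i)) = (\<Prod>v'\<in>g ` (I - {i}). (v' - g i)) * (\<Prod>x\<in>X. (x - g i))"
      unfolding e by (rule prod.union_disjoint) (use I X disj in auto)
    also have "(\<Prod>v'\<in>g ` (I - {i}). (v' - g i)) = (\<Prod>j\<in>I-{i}. (g j - g i))"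
      by (subst prod.reindex) (use inj in \<open>auto intro: inj_on_subset\<close>)
    finally show "((\<lambda>v. poly p v / (\<Prod>v'\<in>S-{v}. (v' - v))) \<circ> g) i = poly p (g i) / ((\<Prod>x\<in>X. (x - g i)) * (\<Prod>j\<in>I-{i}. (g j - g i)))"
      by (simp add: mult.commute)
  qed simp
  also have "(\<Sum>v\<in>X. poly p v / (\<Prod>v'\<in>S-{v}. (v' - v))) =
      (\<Sum>x\<in>X. poly p x / ((\<Prod>x'\<in>X-{x}. (x' - x)) * (\<Prod>j\<in>I. (g j - x))))"
  proof (rule sum.cong)
    fix x assume x: "x \<in> X"
    have e: "S - {x} = g ` I \<union> (X - {x})" unfolding S_def using x disj by auto
    have "(\<Prod>v'\<in>S-{x}. (v' - x)) = (\<Prod>v'\<in>g ` I. (v' - x)) * (\<Prod>x'\<in>X-{x}. (x' - x))"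
      unfolding e by (rule prod.union_disjoint) (use I X disj in auto)
    also have "(\<Prod>v'\<in>g ` I. (v' - x)) = (\<Prod>j\<in>I. (g j - x))"
      by (subst prod.reindex[OF inj]) simp
    finally show "poly p x / (\<Prod>v'\<in>S-{x}. (v' - x)) = poly p x / ((\<Prod>x'\<in>X-{x}. (x' - x)) * (\<Prod>j\<in>I. (g j - x)))"
      by (simp add: mult.commute)
  qed simp
  finally show ?thesis using D by simp
qed

lemma ID1_alg:
  fixes U :: "nat \<Rightarrow> real" and N z :: nat and t w K :: real
  assumes inj: "inj_on U {1..N+1}" and z: "1 \<le> z" "z \<le> N" and wU: "w \<notin> U ` {1..N+1}"
  shows "(\<Sum>y\<in>{1..N+1}. K * (U y * (\<Prod>r\<in>{1..N}-{z}. (U r - t * U y))) / ((w - U y) * (\<Prod>r\<in>{1..N+1}-{y}. (U r - U y))))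
       = - K * (w * (\<Prod>r\<in>{1..N}-{z}. (U r - t * w))) / (\<Prod>r\<in>{1..N+1}. (U r - w))"
proof -
  define p where "p = [:0, 1:] * (\<Prod>r\<in>{1..N}-{z}. [:U r, -t:])"
  have pp: "poly p x = x * (\<Prod>r\<in>{1..N}-{z}. (U r - t * x))" for x
    unfolding p_def by (simp add: poly_prod algebra_simps)
  have "degree (\<Prod>r\<in>{1..N}-{z}. [:U r, -t:]) \<le> (\<Sum>r\<in>{1..N}-{z}. degree [:U r, -t:])"
    using degree_prod_sum_le[of "{1..N}-{z}" "\<lambda>r. [:U r, -t:]"] by (simp add: o_def)
  also have "\<dots> \<le> (\<Sum>r\<in>{1..N}-{z}. 1)" by (rule sum_mono) simp
  also have "\<dots> = N - 1" using z by simp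
  finally have d1: "degree (\<Prod>r\<in>{1..N}-{z}. [:U r, -t:]) \<le> N - 1" .
  have "degree p \<le> degree [:0, 1::real:] + degree (\<Prod>r\<in>{1..N}-{z}. [:U r, -t:])"
    unfolding p_def by (rule degree_mult_le)
  then have "degree p \<le> 1 + (N - 1)" using d1 by simp
  then have dg: "degree p + 1 < card {1..N+1} + card {w}" using z by simp
  have D: "(\<Sum>i\<in>{1..N+1}. poly p (U i) / ((\<Prod>x\<in>{w}. (x - U i)) * (\<Prod>j\<in>{1..N+1}-{i}. (U j - U i))))
       + (\<Sum>x\<in>{w}. poly p x / ((\<Prod>x'\<in>{w}-{x}. (x' - x)) * (\<Prod>j\<in>{1..N+1}. (U j - x)))) = 0"
    by (rule DD_nodes[OF _ _ inj _ dg]) (use wU in auto)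
  then have D': "(\<Sum>i\<in>{1..N+1}. poly p (U i) / ((w - U i) * (\<Prod>j\<in>{1..N+1}-{i}. (U j - U i))))
      = - (poly p w / (\<Prod>j\<in>{1..N+1}. (U j - w)))" by simp
  have "(\<Sum>y\<in>{1..N+1}. K * (U y * (\<Prod>r\<in>{1..N}-{z}. (U r - t * U y))) / ((w - U y) * (\<Prod>r\<in>{1..N+1}-{y}. (U r - U y))))
      = (\<Sum>i\<in>{1..N+1}. K * (poly p (U i) / ((w - U i) * (\<Prod>j\<in>{1..N+1}-{i}. (U j - U i)))))"
    by (rule sum.cong) (simp_all add: pp)
  also have "\<dots> = K * (\<Sum>i\<in>{1..N+1}. poly p (U i) / ((w - U i) * (\<Prod>j\<in>{1..N+1}-{i}. (U j - U i))))"
    by (rule sum_distrib_left[symmetric])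
  also have "\<dots> = - K * (w * (\<Prod>r\<in>{1..N}-{z}. (U r - t * w))) / (\<Prod>r\<in>{1..N+1}. (U r - w))"
    unfolding D' by (simp add: pp)
  finally show ?thesis .
qed

lemma ID1_final:
  fixes U :: "nat \<Rightarrow> real" and N z :: nat and q t w :: real
  assumes z: "1 \<le> z" "z \<le> N" and Un: "U (N+1) \<noteq> 0" and w: "w \<noteq> 0" and Uz: "U z = q * w"
    and q1: "q \<noteq> 1" and t0: "t \<noteq> 0" and t1: "t \<noteq> 1"
    and N0: "(\<Prod>r\<in>{1..N}-{z}. (U r - t * w)) \<noteq> 0"
    and Pw: "(\<Prod>r\<in>{1..N+1}-{z}. (U r - w)) \<noteq> 0"
  shows "- (t * U (N+1) * (1 - q) * (1 - t) / (t ^ z *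
            ((U (N+1) / w) * ((w - t * w) * (\<Prod>r\<in>{1..N}-{z}. (U r - t * w))) / (t ^ (z - 1) * (\<Prod>r\<in>{1..N+1}-{z}. (U r - w))))))
        * (w * (\<Prod>r\<in>{1..N}-{z}. (U r - t * w))) / (\<Prod>r\<in>{1..N+1}. (U r - w)) = 1"
proof -
  have e: "(\<Prod>r\<in>{1..N+1}. (U r - w)) = (U z - w) * (\<Prod>r\<in>{1..N+1}-{z}. (U r - w))"
    using z by (subst prod.remove[of _ z]) auto
  have tz: "t ^ z = t * t ^ (z - 1)" using z by (cases z) auto
  define A where "A = (\<Prod>r\<in>{1..N}-{z}. (U r - t * w))"
  define B where "B = (\<Prod>r\<in>{1..N+1}-{z}. (U r - w))"
  define X where "X = t ^ (z - 1)"
  have X: "X \<noteq> 0" using t0 X_def by simp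
  have A: "A \<noteq> 0" and B: "B \<noteq> 0" using N0 Pw A_def B_def by auto
  have 1: "(U (N+1) / w) * ((w - t * w) * A) / (X * B) = U (N+1) * (1 - t) * A / (X * B)"
    using w X B by (simp add: field_simps)
  have 2: "t * U (N+1) * (1 - q) * (1 - t) / (t * X * (U (N+1) * (1 - t) * A / (X * B))) = (1 - q) * B / A"
    using X A B t0 t1 Un by (simp add: field_simps)
  have 3: "(1 - q) * B / A * (w * A) / ((q * w - w) * B) = - 1"
  proof -
    have "q * w - w = (q - 1) * w" by (simp add: algebra_simps)
    moreover have "q - 1 \<noteq> 0" using q1 by simp
    ultimately show ?thesis using A B w by (simp add: field_simps)
  qed
  show ?thesis unfolding e tz Uz A_def[symmetric] B_def[symmetric] X_def[symmetric] 1 2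
    using 3 by (simp add: mult.assoc)
qed

lemma ID1_term_core:
  fixes Vn Uy N0 D AV t a b T W Q S :: real
  assumes "t \<noteq> 0" "Uy \<noteq> 0" "D \<noteq> 0" "AV \<noteq> 0" "a \<noteq> 0" "b \<noteq> 0" "T \<noteq> 0" "W \<noteq> 0" "Q \<noteq> 0" "S \<noteq> 0"
  shows "a / b * ((Vn / Uy) * ((- T) * N0) / (a * D) * (1 / AV)) / ((W / Uy) * (T / (t * Uy)) / (Q * S))
       = (t * Vn * Q * S / (b * AV)) * (Uy * N0) / ((- W) * D)"
  using assms by (simp add: field_simps)

lemma ID1_term:
  fixes Vn Uy Uz w N0 D AV t q a b :: real
  assumes t0: "t \<noteq> 0" and q1: "q \<noteq> 1" and t1: "t \<noteq> 1" and Uy: "Uy \<noteq> 0" and wy: "w \<noteq> Uy"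
    and zy: "Uz \<noteq> t * Uy" and D: "D \<noteq> 0" and AV: "AV \<noteq> 0" and a: "a \<noteq> 0" and b: "b \<noteq> 0"
  shows "a / b * ((Vn / Uy) * ((Uz - t * Uy) * N0) / (a * D) * (1 / AV)) /
           ((1 - w / Uy) * (1 - Uz / (t * Uy)) / ((1 - q) * (1 - t)))
       = (t * Vn * (1 - q) * (1 - t) / (b * AV)) * (Uy * N0) / ((w - Uy) * D)"
proof -
  have g1: "1 - w / Uy = (Uy - w) / Uy" using Uy by (simp add: field_simps)
  have g2: "1 - Uz / (t * Uy) = (t * Uy - Uz) / (t * Uy)" using Uy t0 by (simp add: field_simps)
  have n1: "Uy - w \<noteq> 0" "t * Uy - Uz \<noteq> 0" using wy zy by auto
  have n2: "1 - q \<noteq> 0" "1 - t \<noteq> 0" using q1 t1 by auto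
  have e: "Uz - t * Uy = - (t * Uy - Uz)" "w - Uy = - (Uy - w)" by auto
  show ?thesis unfolding g1 g2 e
    by (rule ID1_term_core) (use t0 Uy D AV a b n1 n2 in auto)
qed

lemma ID2_term_core:
  fixes a b c Ab Vn q Uz Qm P' T Et M P Uy t :: real
  assumes "a \<noteq> 0" "b \<noteq> 0" "c \<noteq> 0" "Vn \<noteq> 0" "q \<noteq> 0" "Uz \<noteq> 0" "Qm \<noteq> 0" "P' \<noteq> 0" "T \<noteq> 0" "Et \<noteq> 0"
    "M \<noteq> 0" "P \<noteq> 0" "Uy \<noteq> 0" "t \<noteq> 0"
  shows "a / b * (Ab * (1 / (c * (Vn * q / Uz) * ((Uz * Qm / q) * P') / (T * Et / (M * Uz))))) /
            ((P / (q * Uy)) * (T / (t * Uy)) / (Qm * (- M)))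
       = (t * a) * q * Uy ^ 2 * Ab / ((b * c) * Vn) * Et / ((- Uz) * P * P')"
  using assms by (simp add: field_simps power2_eq_square)

lemma ID2_term:
  fixes Vn Uy Uz P' Q1 Et Ab t q a b c ty tn :: real
  assumes t0: "t \<noteq> 0" and t1: "t \<noteq> 1" and q0: "q \<noteq> 0" and q1: "q \<noteq> 1"
    and Uz: "Uz \<noteq> 0" and Uy: "Uy \<noteq> 0" and Vn: "Vn \<noteq> 0" and P': "P' \<noteq> 0" and Q1: "Q1 \<noteq> 0"
    and qz: "q * Uy - Uz \<noteq> 0" and tz: "t * Uy - Uz \<noteq> 0" and a: "a \<noteq> 0" and b: "b \<noteq> 0" and c: "c \<noteq> 0"
    and rel: "(t * Uz - Uz) * Q1 = (t * Uy - Uz) * Et" and ty: "ty = t * a" and tn: "tn = b * c"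
  shows "a / b * (Ab * (1 / (c * (Vn * q / Uz) * ((Uz / q - Uz) * P') / Q1))) /
            ((1 - (Uz / q) / Uy) * (1 - Uz / (t * Uy)) / ((1 - q) * (1 - t)))
       = ty * q * Uy ^ 2 * Ab / (tn * Vn) * Et / ((0 - Uz) * (q * Uy - Uz) * P')"
proof -
  have tm1: "t - 1 \<noteq> 0" "1 - q \<noteq> 0" using t1 q1 by auto
  have Qe: "Q1 = (t * Uy - Uz) * Et / ((t - 1) * Uz)"
  proof -
    have "(t * Uz - Uz) = (t - 1) * Uz" by (simp add: algebra_simps)
    then have "((t - 1) * Uz) * Q1 = (t * Uy - Uz) * Et" using rel by simp
    then show ?thesis using tm1 Uz by (simp add: field_simps)
  qed
  have g1: "1 - (Uz / q) / Uy = (q * Uy - Uz) / (q * Uy)" using Uy q0 by (simp add: field_simps)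
  have g2: "1 - Uz / (t * Uy) = (t * Uy - Uz) / (t * Uy)" using Uy t0 by (simp add: field_simps)
  have g3: "Uz / q - Uz = Uz * (1 - q) / q" using q0 by (simp add: field_simps)
  have g4: "1 - t = - (t - 1)" "0 - Uz = - Uz" by auto
  have Et: "Et \<noteq> 0" using Q1 Qe by auto
  show ?thesis unfolding g1 g2 g3 g4 Qe ty tn
    by (rule ID2_term_core) (use t0 q0 Uz Uy Vn P' qz tz a b c tm1 Et in auto)
qed

lemma ID2_alg:
  fixes U :: "nat \<Rightarrow> real" and N y :: nat and q t K2 :: real
  assumes inj: "inj_on U {1..N}" and U0: "0 \<notin> U ` {1..N}" and Uq: "q * U y \<notin> U ` {1..N}" and qy: "q * U y \<noteq> 0"
    and y: "1 \<le> y" "y \<le> N + 1"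
  shows "(\<Sum>z\<in>{1..N}. K2 * (\<Prod>r\<in>{1..N+1}-{y}. (t * U r - U z)) / ((0 - U z) * (q * U y - U z) * (\<Prod>r\<in>{1..N}-{z}. (U r - U z))))
       = - K2 * ((\<Prod>r\<in>{1..N+1}-{y}. (t * U r - 0)) / ((q * U y - 0) * (\<Prod>r\<in>{1..N}. (U r - 0)))
               + (\<Prod>r\<in>{1..N+1}-{y}. (t * U r - q * U y)) / ((0 - q * U y) * (\<Prod>r\<in>{1..N}. (U r - q * U y))))"
proof -
  define p where "p = (\<Prod>r\<in>{1..N+1}-{y}. [:t * U r, -1:])"
  have pp: "poly p x = (\<Prod>r\<in>{1..N+1}-{y}. (t * U r - x))" for x
    unfolding p_def by (simp add: poly_prod algebra_simps)
  have "degree p \<le> (\<Sum>r\<in>{1..N+1}-{y}. degree [:t * U r, -1:])"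
    unfolding p_def using degree_prod_sum_le[of "{1..N+1}-{y}" "\<lambda>r. [:t * U r, -1:]"] by (simp add: o_def)
  also have "\<dots> \<le> (\<Sum>r\<in>{1..N+1}-{y}. 1)" by (rule sum_mono) simp
  also have "\<dots> = N" using y by simp
  finally have dgp: "degree p \<le> N" .
  have cX: "card {0, q * U y} = 2" using qy by simp
  have dg: "degree p + 1 < card {1..N} + card {0, q * U y}" using dgp cX by simp
  have D: "(\<Sum>i\<in>{1..N}. poly p (U i) / ((\<Prod>x\<in>{0, q * U y}. (x - U i)) * (\<Prod>j\<in>{1..N}-{i}. (U j - U i))))
       + (\<Sum>x\<in>{0, q * U y}. poly p x / ((\<Prod>x'\<in>{0, q * U y}-{x}. (x' - x)) * (\<Prod>j\<in>{1..N}. (U j - x)))) = 0"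
    by (rule DD_nodes[OF _ _ inj _ dg]) (use U0 Uq in auto)
  have X1: "(\<Prod>x\<in>{0, q * U y}. (x - U i)) = (0 - U i) * (q * U y - U i)" for i
    using qy by simp
  have X2: "(\<Sum>x\<in>{0, q * U y}. poly p x / ((\<Prod>x'\<in>{0, q * U y}-{x}. (x' - x)) * (\<Prod>j\<in>{1..N}. (U j - x))))
     = poly p 0 / ((q * U y - 0) * (\<Prod>j\<in>{1..N}. (U j - 0))) + poly p (q * U y) / ((0 - q * U y) * (\<Prod>j\<in>{1..N}. (U j - q * U y)))"
  proof -
    have "{0, q * U y} - {0} = {q * U y}" "{0, q * U y} - {q * U y} = {0}" using qy by auto
    then show ?thesis using qy by (simp add: sum.insert)
  qed
  have D': "(\<Sum>i\<in>{1..N}. poly p (U i) / ((0 - U i) * (q * U y - U i) * (\<Prod>j\<in>{1..N}-{i}. (U j - U i))))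
     = - (poly p 0 / ((q * U y - 0) * (\<Prod>j\<in>{1..N}. (U j - 0))) + poly p (q * U y) / ((0 - q * U y) * (\<Prod>j\<in>{1..N}. (U j - q * U y))))"
    using D unfolding X1 X2 by (simp add: eq_neg_iff_add_eq_0)
  have "(\<Sum>z\<in>{1..N}. K2 * (\<Prod>r\<in>{1..N+1}-{y}. (t * U r - U z)) / ((0 - U z) * (q * U y - U z) * (\<Prod>r\<in>{1..N}-{z}. (U r - U z))))
      = (\<Sum>i\<in>{1..N}. K2 * (poly p (U i) / ((0 - U i) * (q * U y - U i) * (\<Prod>j\<in>{1..N}-{i}. (U j - U i)))))"
    by (rule sum.cong) (simp_all add: pp)
  also have "\<dots> = K2 * (\<Sum>i\<in>{1..N}. poly p (U i) / ((0 - U i) * (q * U y - U i) * (\<Prod>j\<in>{1..N}-{i}. (U j - U i))))"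
    by (rule sum_distrib_left[symmetric])
  also have "\<dots> = - K2 * ((\<Prod>r\<in>{1..N+1}-{y}. (t * U r - 0)) / ((q * U y - 0) * (\<Prod>r\<in>{1..N}. (U r - 0)))
               + (\<Prod>r\<in>{1..N+1}-{y}. (t * U r - q * U y)) / ((0 - q * U y) * (\<Prod>r\<in>{1..N}. (U r - q * U y))))"
  proof -
    have "K2 * (\<Sum>i\<in>{1..N}. poly p (U i) / ((0 - U i) * (q * U y - U i) * (\<Prod>j\<in>{1..N}-{i}. (U j - U i))))
       = K2 * (- (poly p 0 / ((q * U y - 0) * (\<Prod>j\<in>{1..N}. (U j - 0))) + poly p (q * U y) / ((0 - q * U y) * (\<Prod>j\<in>{1..N}. (U j - q * U y)))))"
      by (rule arg_cong[OF D'])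
    then show ?thesis by (simp only: pp)
  qed
  finally show ?thesis .
qed

lemma ID2_final_core:
  fixes t ty1 tN q Uy Vn L PA PB :: real
  assumes "t \<noteq> 0" "ty1 \<noteq> 0" "tN \<noteq> 0" "q \<noteq> 0" "Uy \<noteq> 0" "Vn \<noteq> 0" "L \<noteq> 0" "PA \<noteq> 0" "PB \<noteq> 0"
  shows "- (t * ty1 * q * Uy ^ 2 * (tN / ty1 * (Vn / Uy) * PA / PB) / (t * tN * Vn)) *
           (tN * (L * Vn / Uy) / ((q * Uy - 0) * L) + PB / ((0 - q * Uy) * PA))
         + ty1 * (tN / ty1 * (Vn / Uy) * PA / PB) = 1"
proof -
  have 1: "t * ty1 * q * Uy ^ 2 * (tN / ty1 * (Vn / Uy) * PA / PB) / (t * tN * Vn) = q * Uy * PA / PB"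
    using assms by (simp add: field_simps power2_eq_square)
  have 2: "tN * (L * Vn / Uy) / ((q * Uy - 0) * L) + PB / ((0 - q * Uy) * PA) = tN * Vn / (q * Uy * Uy) - PB / (q * Uy * PA)"
    using assms by (simp add: field_simps)
  have 3: "q * Uy * PA / PB * (tN * Vn / (q * Uy * Uy) - PB / (q * Uy * PA)) = tN * Vn * PA / (Uy * PB) - 1"
    using assms by (simp add: field_simps)
  have 4: "ty1 * (tN / ty1 * (Vn / Uy) * PA / PB) = tN * Vn * PA / (Uy * PB)"
    using assms by (simp add: field_simps)
  show ?thesis unfolding 1 2 4 using 3 by simp
qed

lemma ID2_final:
  fixes U :: "nat \<Rightarrow> real" and N y :: nat and q t :: real
  assumes U: "\<forall>r\<in>{1..N+1}. U r \<noteq> 0" and y: "1 \<le> y" "y \<le> N + 1" and t0: "t \<noteq> 0" and q0: "q \<noteq> 0"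
    and PA: "(\<Prod>r\<in>{1..N}. (U r - q * U y)) \<noteq> 0" and PB: "(\<Prod>r\<in>{1..N+1}-{y}. (t * U r - q * U y)) \<noteq> 0"
  shows "- (t ^ y * q * U y ^ 2 * (t ^ (N + 1 - y) * (U (N+1) / U y) * (\<Prod>r\<in>{1..N}. (U r - q * U y)) / (\<Prod>r\<in>{1..N+1}-{y}. (t * U r - q * U y))) / (t ^ (N+1) * U (N+1))) *
           ((\<Prod>r\<in>{1..N+1}-{y}. (t * U r - 0)) / ((q * U y - 0) * (\<Prod>r\<in>{1..N}. (U r - 0)))
               + (\<Prod>r\<in>{1..N+1}-{y}. (t * U r - q * U y)) / ((0 - q * U y) * (\<Prod>r\<in>{1..N}. (U r - q * U y))))
         + t ^ (y - 1) * (t ^ (N + 1 - y) * (U (N+1) / U y) * (\<Prod>r\<in>{1..N}. (U r - q * U y)) / (\<Prod>r\<in>{1..N+1}-{y}. (t * U r - q * U y))) = 1"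
proof -
  define PA' where "PA' = (\<Prod>r\<in>{1..N}. (U r - q * U y))"
  define PB' where "PB' = (\<Prod>r\<in>{1..N+1}-{y}. (t * U r - q * U y))"
  define R where "R = (\<Prod>r\<in>{1..N+1}-{y}. U r)"
  define L where "L = (\<Prod>r\<in>{1..N}. U r)"
  have e0: "(\<Prod>r\<in>{1..N+1}-{y}. (t * U r - 0)) = t ^ N * R"
  proof -
    have "(\<Prod>r\<in>{1..N+1}-{y}. (t * U r - 0)) = t ^ card ({1..N+1}-{y}) * R"
      by (simp add: R_def prod.distrib)
    moreover have "card ({1..N+1}-{y}) = N" using y by simp
    ultimately show ?thesis by simp
  qed
  have e1: "(\<Prod>r\<in>{1..N}. (U r - 0)) = L" by (simp add: L_def)
  have Uy: "U y \<noteq> 0" and Un: "U (N+1) \<noteq> 0" using U y by auto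
  have RL: "R = L * U (N+1) / U y"
  proof -
    have "U y * R = (\<Prod>r\<in>{1..N+1}. U r)" unfolding R_def using y by (subst prod.remove[of _ y]) auto
    also have "\<dots> = L * U (N+1)" unfolding L_def by (simp add: atLeastAtMostSuc_conv mult.commute)
    finally show ?thesis using Uy by (simp add: field_simps)
  qed
  have L: "L \<noteq> 0" unfolding L_def using U by (subst prod_zero_iff) auto
  have p1: "t ^ (N + 1 - y) = t ^ N / t ^ (y - 1)"
  proof -
    have "t ^ (N + 1 - y) * t ^ (y - 1) = t ^ N" using y by (simp add: power_add[symmetric])
    then show ?thesis using t0 by (simp add: field_simps)
  qed
  have p2: "t ^ y = t * t ^ (y - 1)" using y by (cases y) auto
  have p3: "t ^ (N + 1) = t * t ^ N" by simp
  show ?thesis unfolding e0 e1 PA'_def[symmetric] PB'_def[symmetric] p1 p2 p3 RL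
    by (rule ID2_final_core) (use t0 q0 Uy Un L PA PB PA'_def PB'_def in auto)
qed

definition qt :: "real \<Rightarrow> real \<Rightarrow> int \<Rightarrow> int \<Rightarrow> real" where
  "qt q t a b = q powi a * t powi b"

definition Uw :: "real \<Rightarrow> real \<Rightarrow> nat list \<Rightarrow> nat \<Rightarrow> real" where
  "Uw q t la r = qt q t (int (part la r)) (- int r)"

context
  fixes q t :: real
  assumes q0: "q \<noteq> 0" and t0: "t \<noteq> 0" and g: "gen q t"
begin

lemma qt_mult: "qt q t a b * qt q t c d = qt q t (a + c) (b + d)"
  unfolding qt_def using q0 t0 by (simp add: power_int_add)

lemma qt_div: "qt q t a b / qt q t c d = qt q t (a - c) (b - d)"
  unfolding qt_def using q0 t0 by (simp add: power_int_diff)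

lemma qt_nz: "qt q t a b \<noteq> 0"
  unfolding qt_def using q0 t0 by simp

lemma t_qt: "t = qt q t 0 1" by (simp add: qt_def)
lemma q_qt: "q = qt q t 1 0" by (simp add: qt_def)

lemma qt_eq: "qt q t a b = qt q t c d \<longleftrightarrow> a = c \<and> b = d"
proof
  assume h: "qt q t a b = qt q t c d"
  then have "qt q t a b / qt q t c d = 1" using qt_nz by simp
  then have "qt q t (a - c) (b - d) = 1" by (simp add: qt_div)
  then have "(a - c, b - d) = (0, 0)" using g unfolding gen_def qt_def by blast
  then show "a = c \<and> b = d" by simp
qed simp

lemma br_qt: "br q t i j = 1 - qt q t i j" by (simp add: br_def qt_def)

lemma q1: "q \<noteq> 1"
proof
  assume "q = 1"
  then have "qt q t 1 0 = qt q t 0 0" by (simp add: qt_def)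
  then show False by (simp only: qt_eq) simp
qed

lemma t1: "t \<noteq> 1"
proof
  assume "t = 1"
  then have "qt q t 0 1 = qt q t 0 0" by (simp add: qt_def)
  then show False by (simp only: qt_eq) simp
qed

lemma Uw_nz: "Uw q t la r \<noteq> 0" unfolding Uw_def by (rule qt_nz)

lemma Uw_inj: "inj_on (Uw q t la) A"
  unfolding inj_on_def Uw_def qt_eq by simp

lemma frac1: "(qt q t a b - qt q t c d) / qt q t a b = 1 - qt q t (c - a) (d - b)"
proof -
  have "(qt q t a b - qt q t c d) / qt q t a b = 1 - qt q t c d / qt q t a b"
    using qt_nz[of a b] by (simp add: field_simps)
  then show ?thesis by (simp add: qt_div)
qed

lemma t_mult: "t * qt q t a b = qt q t a (b + 1)"
proof -
  have "t powi (b + 1) = t * t powi b" by (rule power_int_add_1') (use t0 in simp)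
  then show ?thesis unfolding qt_def by (simp add: mult.left_commute)
qed

lemma q_mult: "q * qt q t a b = qt q t (a + 1) b"
proof -
  have "q powi (a + 1) = q * q powi a" by (rule power_int_add_1') (use q0 in simp)
  then show ?thesis unfolding qt_def by (simp add: mult.assoc)
qed

lemma qt_sub_frac: "qt q t c d / qt q t a b = qt q t (c - a) (d - b)" by (rule qt_div)

lemma card_minus1: "y \<in> {1..N+1} \<Longrightarrow> card ({1..N+1} - {y}) = (N::nat)" by simp

lemma alpha_closed:
  assumes ka: "is_partition ka" and ad: "addable ka y" and N: "length ka \<le> N"
  shows "alpha q t (addrow ka y) ka = (Uw q t ka (N+1) / Uw q t ka y) * (\<Prod>r\<in>{1..N}. (Uw q t ka r - t * Uw q t ka y))
            / (t ^ (y - 1) * (\<Prod>r\<in>{1..N+1}-{y}. (Uw q t ka r - Uw q t ka y)))"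
proof -
  define U where "U = Uw q t ka"
  define P where "P r = int (part ka r)" for r
  have y: "1 \<le> y" "y \<le> N + 1" using ad N by (auto simp: addable_def)
  have U: "U r = qt q t (P r) (- int r)" for r by (simp add: U_def Uw_def P_def)
  have Unz: "U r \<noteq> 0" for r by (simp add: U qt_nz)
  have Uinj: "U r = U r' \<longleftrightarrow> r = r'" for r r' by (auto simp: U qt_eq)
  have tU: "t * U r = qt q t (P r) (1 - int r)" for r by (simp add: U t_mult)
  have f1: "br q t (int (part ka y) - int (part ka r)) (int r - int y + 1) = (U r - t * U y) / U r" for r
    unfolding tU U t_mult q_mult frac1 br_qt P_def by (simp add: algebra_simps)
  have f2: "br q t (int (part ka y) - int (part ka (r+1))) (int r - int y + 1) = (t * (U (r+1) - U y)) / (t * U (r+1))" for r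
  proof -
    have "(t * (U (r+1) - U y)) / (t * U (r+1)) = (U (r+1) - U y) / U (r+1)" using t0 by simp
    also have "\<dots> = br q t (int (part ka y) - int (part ka (r+1))) (int r - int y + 1)"
      unfolding U t_mult q_mult frac1 br_qt P_def by (simp add: algebra_simps)
    finally show ?thesis ..
  qed
  have f3: "br q t (int (part ka r) - int (part ka y)) (int y - 1 - int r) / br q t (int (part ka r) - int (part ka y)) (int y - int r)
      = (U r - t * U y) / (t * (U r - U y))" if r: "r \<in> {1..<y}" for r
  proof -
    have a: "br q t (int (part ka r) - int (part ka y)) (int y - 1 - int r) = (t * U y - U r) / (t * U y)"
      unfolding tU U t_mult q_mult frac1 br_qt P_def by (simp add: algebra_simps)
    have b: "br q t (int (part ka r) - int (part ka y)) (int y - int r) = (U y - U r) / U y"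
      unfolding U t_mult q_mult frac1 br_qt P_def by (simp add: algebra_simps)
    have ne: "U y - U r \<noteq> 0" "U r - U y \<noteq> 0" using r Uinj[of y r] Uinj[of r y] by auto
    show ?thesis unfolding a b using ne Unz[of y] t0 by (simp add: field_simps)
  qed
  have raw: "alpha q t (addrow ka y) ka =
      (\<Prod>r\<in>{y..N}. ((U r - t * U y) / U r) / ((t * (U (r+1) - U y)) / (t * U (r+1)))) *
      (\<Prod>r\<in>{1..<y}. (U r - t * U y) / (t * (U r - U y)))"
    unfolding alpha_raw[OF ka ad g N] f1 f2 by (simp add: f3)
  have B: "\<forall>r\<in>{1..N+1}-{y}. t * (U r - U y) \<noteq> 0" using t0 Uinj by auto
  have G: "(\<Prod>r\<in>{y..N}. ((U r - t * U y) / U r) / ((t * (U (r+1) - U y)) / (t * U (r+1)))) *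
      (\<Prod>r\<in>{1..<y}. (U r - t * U y) / (t * (U r - U y))) =
      t ^ (N + 1 - y) * (U (N+1) / U y) * (\<Prod>r\<in>{1..N}. (U r - t * U y)) / (\<Prod>r\<in>{1..N+1}-{y}. t * (U r - U y))"
    by (rule prodG[where A = "\<lambda>r. U r - t * U y" and B = "\<lambda>r. t * (U r - U y)"]) (use Unz t0 y B in auto)
  have pd: "(\<Prod>r\<in>{1..N+1}-{y}. t * (U r - U y)) = t ^ N * (\<Prod>r\<in>{1..N+1}-{y}. (U r - U y))"
    using y by (simp add: prod.distrib)
  have pw: "t ^ (N + 1 - y) * t ^ (y - 1) = t ^ N" using y by (simp add: power_add[symmetric])
  have "t ^ (N + 1 - y) * (U (N+1) / U y) * (\<Prod>r\<in>{1..N}. (U r - t * U y)) / (t ^ N * (\<Prod>r\<in>{1..N+1}-{y}. (U r - U y)))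
      = (U (N+1) / U y) * (\<Prod>r\<in>{1..N}. (U r - t * U y)) / (t ^ (y - 1) * (\<Prod>r\<in>{1..N+1}-{y}. (U r - U y)))"
    unfolding pw[symmetric] using t0 by (simp add: field_simps)
  then show ?thesis using raw G pd by (simp add: U_def)
qed

lemma alphabar_closed:
  assumes ka: "is_partition ka" and ad: "addable ka y" and N: "length ka \<le> N"
    and B: "\<forall>r\<in>{1..N+1}-{y}. t * Uw q t ka r - q * Uw q t ka y \<noteq> 0"
  shows "alphabar q t (addrow ka y) ka = t ^ (N + 1 - y) * (Uw q t ka (N+1) / Uw q t ka y) * (\<Prod>r\<in>{1..N}. (Uw q t ka r - q * Uw q t ka y))
            / (\<Prod>r\<in>{1..N+1}-{y}. (t * Uw q t ka r - q * Uw q t ka y))"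
proof -
  define U where "U = Uw q t ka"
  define P where "P r = int (part ka r)" for r
  have y: "1 \<le> y" "y \<le> N + 1" using ad N by (auto simp: addable_def)
  have U: "U r = qt q t (P r) (- int r)" for r by (simp add: U_def Uw_def P_def)
  have Unz: "U r \<noteq> 0" for r by (simp add: U qt_nz)
  have tU: "t * U r = qt q t (P r) (1 - int r)" for r by (simp add: U t_mult)
  have qU: "q * U r = qt q t (P r + 1) (- int r)" for r by (simp add: U q_mult)
  have f1: "br q t (int (part ka y) + 1 - int (part ka r)) (int r - int y) = (U r - q * U y) / U r" for r
    unfolding qU U t_mult q_mult frac1 br_qt P_def by (simp add: algebra_simps)
  have f2: "br q t (int (part ka y) + 1 - int (part ka (r+1))) (int r - int y) = (t * U (r+1) - q * U y) / (t * U (r+1))" for r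
    unfolding qU tU U t_mult q_mult frac1 br_qt P_def by (simp add: algebra_simps)
  have f3: "br q t (int (part ka r) - int (part ka y) - 1) (int y - int r) / br q t (int (part ka r) - int (part ka y) - 1) (int y - int r + 1)
      = (U r - q * U y) / (t * U r - q * U y)" if r: "r \<in> {1..<y}" for r
  proof -
    have a: "br q t (int (part ka r) - int (part ka y) - 1) (int y - int r) = (q * U y - U r) / (q * U y)"
      unfolding qU U t_mult q_mult frac1 br_qt P_def by (simp add: algebra_simps)
    have b: "br q t (int (part ka r) - int (part ka y) - 1) (int y - int r + 1) = (q * U y - t * U r) / (q * U y)"
      unfolding qU tU U t_mult q_mult frac1 br_qt P_def by (simp add: algebra_simps)
    have ne: "q * U y - t * U r \<noteq> 0" "t * U r - q * U y \<noteq> 0" using B r y unfolding U_def by auto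
    have "(q * U y - U r) / (q * U y) / ((q * U y - t * U r) / (q * U y)) = (q * U y - U r) / (q * U y - t * U r)"
      using Unz[of y] q0 ne by (simp add: field_simps)
    also have "\<dots> = (U r - q * U y) / (t * U r - q * U y)"
    proof -
      have "q * U y - U r = - (U r - q * U y)" "q * U y - t * U r = - (t * U r - q * U y)" by auto
      then show ?thesis by (simp only: minus_divide_divide)
    qed
    finally show ?thesis unfolding a b .
  qed
  have raw: "alphabar q t (addrow ka y) ka =
      (\<Prod>r\<in>{y..N}. ((U r - q * U y) / U r) / ((t * U (r+1) - q * U y) / (t * U (r+1)))) *
      (\<Prod>r\<in>{1..<y}. (U r - q * U y) / (t * U r - q * U y))"
    unfolding alphabar_raw[OF ka ad g N] f1 f2 by (simp add: f3)
  have G: "(\<Prod>r\<in>{y..N}. ((U r - q * U y) / U r) / ((t * U (r+1) - q * U y) / (t * U (r+1)))) *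
      (\<Prod>r\<in>{1..<y}. (U r - q * U y) / (t * U r - q * U y)) =
      t ^ (N + 1 - y) * (U (N+1) / U y) * (\<Prod>r\<in>{1..N}. (U r - q * U y)) / (\<Prod>r\<in>{1..N+1}-{y}. (t * U r - q * U y))"
    by (rule prodG[where A = "\<lambda>r. U r - q * U y" and B = "\<lambda>r. t * U r - q * U y"]) (use Unz t0 y B U_def in auto)
  show ?thesis using raw G by (simp add: U_def)
qed

lemma qt_div_q: "qt q t a b / q = qt q t (a - 1) b"
proof -
  have "q powi (a - 1) = q powi a / q" using power_int_diff[of q a 1] q0 by simp
  then show ?thesis by (simp add: qt_def)
qed

end

lemma Uw_delrow:
  assumes la: "is_partition la" and rz: "removable la z" and q0: "q \<noteq> 0" and t0: "t \<noteq> 0" and g: "gen q t"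
  shows "Uw q t (delrow la z) r = (if r = z then Uw q t la z / q else Uw q t la r)"
proof -
  have pz: "part la z \<ge> 1" using rz by (simp add: removable_def)
  show ?thesis
  proof (cases "r = z")
    case True
    have "Uw q t la z / q = qt q t (int (part la z) - 1) (- int z)"
      unfolding Uw_def by (rule qt_div_q[OF q0 t0 g])
    moreover have "int (part la z - 1) = int (part la z) - 1" using pz by simp
    ultimately show ?thesis using True by (simp add: Uw_def part_delrow[OF la rz])
  next
    case False then show ?thesis by (simp add: Uw_def part_delrow[OF la rz])
  qed
qed

lemma Pdown_sum:
  assumes la: "is_partition la" and q0: "q \<noteq> 0" and t0: "t \<noteq> 0" and g: "gen q t"
    and mu: "mu \<in> Downs la"
  shows "(\<Sum>nu\<in>Ups la. Pdown q t la mu nu) = 1"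
proof -
  obtain z where rz: "removable la z" and mud: "mu = delrow la z" using mu Downs_eq[OF la] by blast
  define N where "N = length la"
  define U where "U = Uw q t la"
  define P where "P r = int (part la r)" for r
  define w where "w = U z / q"
  have z: "1 \<le> z" "z \<le> N" "part la (z+1) < part la z" using rz by (auto simp: removable_def N_def)
  have mup: "is_partition mu" using delrow_partition[OF la rz] mud by simp
  have adz: "addable mu z" using delrow_addable[OF la rz] mud by simp
  have lam: "addrow mu z = la" using addrow_delrow[OF la rz] mud by simp
  have lenmu: "length mu \<le> N" using length_delrow_le[OF la rz] mud N_def by simp
  have Umu: "Uw q t mu r = (if r = z then w else U r)" for r
    using Uw_delrow[OF la rz q0 t0 g] mud by (simp add: U_def w_def)
  have U: "U r = qt q t (P r) (- int r)" for r by (simp add: U_def Uw_def P_def)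
  have Unz: "U r \<noteq> 0" for r by (simp add: U qt_nz[OF q0 t0 g])
  have Uinj: "U r = U r' \<longleftrightarrow> r = r'" for r r' by (auto simp: U qt_eq[OF q0 t0 g])
  have tU: "t * U r = qt q t (P r) (1 - int r)" for r by (simp add: U t_mult[OF q0 t0 g])
  have wq: "w = qt q t (P z - 1) (- int z)" unfolding w_def U by (rule qt_div_q[OF q0 t0 g])
  have tw: "t * w = qt q t (P z - 1) (1 - int z)" by (simp add: wq t_mult[OF q0 t0 g])
  have w0: "w \<noteq> 0" by (simp add: wq qt_nz[OF q0 t0 g])
  have Uzw: "U z = q * w" using q0 by (simp add: w_def)
  have q1: "q \<noteq> 1" and t1: "t \<noteq> 1" using q1[OF q0 t0 g] t1[OF q0 t0 g] by auto
  have mono: "P j \<le> P i" if "1 \<le> i" "i \<le> j" for i j using part_mono[OF la that] by (simp add: P_def)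
  define N0 where "N0 x = (\<Prod>r\<in>{1..N}-{z}. (U r - t * x))" for x
  define D where "D y = (\<Prod>r\<in>{1..N+1}-{y}. (U r - U y))" for y
  define Pw where "Pw = (\<Prod>r\<in>{1..N+1}-{z}. (U r - w))"
  define AV where "AV = (U (N+1) / w) * ((w - t * w) * N0 w) / (t ^ (z - 1) * Pw)"
  define K where "K = t * U (N+1) * (1 - q) * (1 - t) / (t ^ z * AV)"
  define T1 where "T1 y = K * (U y * N0 (U y)) / ((w - U y) * D y)" for y
  have wU: "w \<noteq> U r" for r
  proof
    assume "w = U r"
    then have "P z - 1 = P r \<and> - int z = - int r" unfolding wq U qt_eq[OF q0 t0 g] .
    then show False by auto
  qed
  have N0w': "\<forall>r\<in>{1..N}-{z}. U r \<noteq> t * w"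
  proof (intro ballI)
    fix r assume r: "r \<in> {1..N} - {z}"
    show "U r \<noteq> t * w"
    proof
      assume "U r = t * w"
      then have "P r = P z - 1 \<and> - int r = 1 - int z" unfolding tw unfolding U qt_eq[OF q0 t0 g] .
      then have rz1: "r = z - 1" and pr: "P r = P z - 1" by auto
      have "P z \<le> P (z - 1)" using mono[of "z - 1" z] r z rz1 by auto
      then show False using pr rz1 by simp
    qed
  qed
  have N0w: "N0 w \<noteq> 0" unfolding N0_def using N0w' by (subst prod_zero_iff) auto
  have Pw0: "Pw \<noteq> 0" unfolding Pw_def using wU by (subst prod_zero_iff) auto
  have D0: "D y \<noteq> 0" for y unfolding D_def using Uinj by (subst prod_zero_iff) auto
  have AV0: "AV \<noteq> 0" unfolding AV_def using Unz w0 N0w Pw0 t0 t1 by simp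
  have alpha_mu: "alpha q t la mu = AV"
  proof -
    have "alpha q t la mu = alpha q t (addrow mu z) mu" using lam by simp
    also have "\<dots> = (Uw q t mu (N+1) / Uw q t mu z) * (\<Prod>r\<in>{1..N}. (Uw q t mu r - t * Uw q t mu z))
            / (t ^ (z - 1) * (\<Prod>r\<in>{1..N+1}-{z}. (Uw q t mu r - Uw q t mu z)))"
      by (rule alpha_closed[OF q0 t0 g mup adz lenmu])
    also have "(\<Prod>r\<in>{1..N}. (Uw q t mu r - t * Uw q t mu z)) = (w - t * w) * N0 w"
    proof -
      have "(\<Prod>r\<in>{1..N}. (Uw q t mu r - t * Uw q t mu z)) = (Uw q t mu z - t * Uw q t mu z) * (\<Prod>r\<in>{1..N}-{z}. (Uw q t mu r - t * Uw q t mu z))"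
        using z by (subst prod.remove[of _ z]) auto
      also have "(\<Prod>r\<in>{1..N}-{z}. (Uw q t mu r - t * Uw q t mu z)) = N0 w"
        unfolding N0_def by (rule prod.cong) (auto simp: Umu)
      finally show ?thesis by (simp add: Umu)
    qed
    also have "(\<Prod>r\<in>{1..N+1}-{z}. (Uw q t mu r - Uw q t mu z)) = Pw"
      unfolding Pw_def by (rule prod.cong) (auto simp: Umu)
    finally show ?thesis using z by (simp add: Umu AV_def)
  qed
  have trm: "Pdown q t la mu (addrow la y) = T1 y" if ad: "addable la y" for y
  proof -
    have y: "1 \<le> y" "y \<le> N + 1" using ad by (auto simp: addable_def N_def)
    have B: "Bexp la mu (addrow la y) = int y - int z"
      unfolding Bexp_def using nfun_addrow[OF la ad] nfun_addrow[OF mup adz] lam y z by simp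
    have A: "Aexp la mu (addrow la y) = P z - 1 - P y"
    proof -
      have "nfun' la = nfun' mu + int (part mu z)" using nfun'_addrow[OF mup adz] lam by simp
      moreover have "int (part mu z) = P z - 1"
        using part_delrow[OF la rz, of z] mud z by (simp add: P_def)
      ultimately show ?thesis unfolding Aexp_def using nfun'_addrow[OF la ad] by (simp add: P_def)
    qed
    have tp: "t powi (Bexp la mu (addrow la y) - 1) = t ^ (y - 1) / t ^ z"
    proof -
      have "Bexp la mu (addrow la y) - 1 = int (y - 1) - int z" using B y by simp
      then show ?thesis using t0 by (simp add: power_int_diff)
    qed
    have g1: "q powi Aexp la mu (addrow la y) * t powi Bexp la mu (addrow la y) = w / U y"
      unfolding A B wq U qt_div[OF q0 t0 g] by (simp add: qt_def algebra_simps)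
    have g2: "q powi (Aexp la mu (addrow la y) + 1) * t powi (Bexp la mu (addrow la y) - 1) = U z / (t * U y)"
      unfolding A B tU unfolding U qt_div[OF q0 t0 g] by (simp add: qt_def algebra_simps)
    have al: "alpha q t (addrow la y) la = (U (N+1) / U y) * ((U z - t * U y) * N0 (U y)) / (t ^ (y - 1) * D y)"
    proof -
      have "alpha q t (addrow la y) la = (U (N+1) / U y) * (\<Prod>r\<in>{1..N}. (U r - t * U y)) / (t ^ (y - 1) * D y)"
        unfolding U_def D_def by (rule alpha_closed[OF q0 t0 g la ad]) (simp add: N_def)
      also have "(\<Prod>r\<in>{1..N}. (U r - t * U y)) = (U z - t * U y) * N0 (U y)"
        unfolding N0_def using z by (subst prod.remove[of _ z]) auto
      finally show ?thesis .
    qed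
    have zy: "U z \<noteq> t * U y"
    proof
      assume "U z = t * U y"
      then have "P z = P y \<and> - int z = 1 - int y" unfolding tU unfolding U qt_eq[OF q0 t0 g] .
      then have "z = y - 1" "P z = P y" "y \<noteq> 1" using z by auto
      moreover have "P y < P (y - 1)" using ad \<open>y \<noteq> 1\<close> by (simp add: addable_def P_def)
      ultimately show False by simp
    qed
    have "Pdown q t la mu (addrow la y) =
        t ^ (y - 1) / t ^ z * ((U (N+1) / U y) * ((U z - t * U y) * N0 (U y)) / (t ^ (y - 1) * D y) * (1 / AV)) /
           ((1 - w / U y) * (1 - U z / (t * U y)) / ((1 - q) * (1 - t)))"
      unfolding Pdown_def gam_def Let_def unfolding g1 g2 unfolding tp al beta_def alpha_mu ..
    also have "\<dots> = (t * U (N+1) * (1 - q) * (1 - t) / (t ^ z * AV)) * (U y * N0 (U y)) / ((w - U y) * D y)"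
      by (rule ID1_term) (use t0 q1 t1 Unz wU zy D0 AV0 in auto)
    finally show ?thesis by (simp add: T1_def K_def)
  qed
  have zero: "T1 y = 0" if y: "y \<in> {1..N+1}" and nad: "\<not> addable la y" for y
  proof -
    have y2: "y \<noteq> 1" using nad y by (auto simp: addable_def N_def)
    have eq: "part la y = part la (y - 1)"
    proof -
      have "part la y \<le> part la (y - 1)" using part_mono[OF la, of "y - 1" y] y y2 by auto
      then show ?thesis using nad y y2 by (auto simp: addable_def N_def)
    qed
    have yz: "y - 1 \<noteq> z"
    proof
      assume "y - 1 = z"
      then have "y = z + 1" using y2 y by auto
      then show False using eq z by simp
    qed
    have "U (y - 1) - t * U y = 0"
      unfolding tU unfolding U using eq y2 y by (simp add: P_def)
    moreover have "y - 1 \<in> {1..N} - {z}" using y y2 yz by auto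
    ultimately have "N0 (U y) = 0" unfolding N0_def by (subst prod_zero_iff) auto
    then show ?thesis by (simp add: T1_def)
  qed
  have "(\<Sum>nu\<in>Ups la. Pdown q t la mu nu) = (\<Sum>y\<in>{y. addable la y}. Pdown q t la mu (addrow la y))"
    unfolding Ups_eq[OF la] by (subst sum.reindex) (auto simp: inj_on_def intro: addrow_inj)
  also have "\<dots> = (\<Sum>y\<in>{y. addable la y}. T1 y)" by (rule sum.cong) (auto simp: trm)
  also have "\<dots> = (\<Sum>y\<in>{1..N+1}. T1 y)"
    by (rule sum.mono_neutral_left) (auto simp: addable_def N_def zero)
  also have "\<dots> = - K * (w * N0 w) / (\<Prod>r\<in>{1..N+1}. (U r - w))"
    unfolding T1_def N0_def D_def
    by (rule ID1_alg) (use z wU Uinj in \<open>auto simp: inj_on_def\<close>)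
  also have "\<dots> = 1"
    unfolding K_def AV_def N0_def Pw_def
    by (rule ID1_final) (use z Unz w0 Uzw q1 t0 t1 N0w Pw0 N0_def Pw_def in auto)
  finally show ?thesis .
qed

lemma Pbar_sum:
  assumes la: "is_partition la" and q0: "q \<noteq> 0" and t0: "t \<noteq> 0" and g: "gen q t"
    and nu: "nu \<in> Ups la"
  shows "(\<Sum>mu\<in>Downs_star la. Pbar q t la mu nu) = 1"
proof -
  obtain y where ad: "addable la y" and nud: "nu = addrow la y" using nu Ups_eq[OF la] by blast
  define N where "N = length la"
  define U where "U = Uw q t la"
  define P where "P r = int (part la r)" for r
  have y: "1 \<le> y" "y \<le> N + 1" using ad by (auto simp: addable_def N_def)
  have U: "U r = qt q t (P r) (- int r)" for r by (simp add: U_def Uw_def P_def)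
  have Unz: "U r \<noteq> 0" for r by (simp add: U qt_nz[OF q0 t0 g])
  have Uinj: "U r = U r' \<longleftrightarrow> r = r'" for r r' by (auto simp: U qt_eq[OF q0 t0 g])
  have tU: "t * U r = qt q t (P r) (1 - int r)" for r by (simp add: U t_mult[OF q0 t0 g])
  have qU: "q * U r = qt q t (P r + 1) (- int r)" for r by (simp add: U q_mult[OF q0 t0 g])
  have q1: "q \<noteq> 1" and t1: "t \<noteq> 1" using q1[OF q0 t0 g] t1[OF q0 t0 g] by auto
  have mono: "P j \<le> P i" if "1 \<le> i" "i \<le> j" for i j using part_mono[OF la that] by (simp add: P_def)
  have PA0: "U r \<noteq> q * U y" for r
  proof
    assume "U r = q * U y"
    then have "P r = P y + 1 \<and> - int r = - int y" unfolding qU unfolding U qt_eq[OF q0 t0 g] .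
    then show False by auto
  qed
  have PB0: "t * U r - q * U y \<noteq> 0" for r
  proof
    assume "t * U r - q * U y = 0"
    then have "t * U r = q * U y" by simp
    then have "P r = P y + 1 \<and> 1 - int r = - int y" unfolding qU tU qt_eq[OF q0 t0 g] .
    then have "r = y + 1" "P r = P y + 1" by auto
    moreover have "P (y + 1) \<le> P y" using mono[of y "y+1"] y by simp
    ultimately show False by simp
  qed
  have PA0': "q * U y \<noteq> U r" for r using PA0[of r] by metis
  define Ab where "Ab = t ^ (N + 1 - y) * (U (N+1) / U y) * (\<Prod>r\<in>{1..N}. (U r - q * U y)) / (\<Prod>r\<in>{1..N+1}-{y}. (t * U r - q * U y))"
  have abnu: "alphabar q t nu la = Ab"
    unfolding nud Ab_def U_def
    by (rule alphabar_closed[OF q0 t0 g la ad]) (use PB0 U_def N_def in auto)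
  define Et where "Et x = (\<Prod>r\<in>{1..N+1}-{y}. (t * U r - x))" for x
  define K2 where "K2 = t ^ y * q * U y ^ 2 * Ab / (t ^ (N+1) * U (N+1))"
  define T2 where "T2 z = K2 * Et (U z) / ((0 - U z) * (q * U y - U z) * (\<Prod>r\<in>{1..N}-{z}. (U r - U z)))" for z
  have trm: "Pbar q t la (delrow la z) nu = T2 z" if rz: "removable la z" for z
  proof -
    define mu where "mu = delrow la z"
    have z: "1 \<le> z" "z \<le> N" "part la (z+1) < part la z" using rz by (auto simp: removable_def N_def)
    have mup: "is_partition mu" using delrow_partition[OF la rz] mu_def by simp
    have adz: "addable mu z" using delrow_addable[OF la rz] mu_def by simp
    have lam: "addrow mu z = la" using addrow_delrow[OF la rz] mu_def by simp
    have lenmu: "length mu \<le> N" using length_delrow_le[OF la rz] mu_def N_def by simp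
    have Umu: "Uw q t mu r = (if r = z then U z / q else U r)" for r
      using Uw_delrow[OF la rz q0 t0 g] mu_def by (simp add: U_def)
    have mune: "mu \<noteq> la"
    proof
      assume "mu = la"
      then have "part mu z = part la z" by simp
      then show False using part_delrow[OF la rz, of z] mu_def z by simp
    qed
    have wq: "U z / q = qt q t (P z - 1) (- int z)" unfolding U by (rule qt_div_q[OF q0 t0 g])
    define P' where "P' = (\<Prod>r\<in>{1..N}-{z}. (U r - U z))"
    define Q1 where "Q1 = (\<Prod>r\<in>{1..N+1}-{z}. (t * U r - U z))"
    have tUz: "t * U r \<noteq> U z" if "r \<noteq> z" for r
    proof
      assume "t * U r = U z"
      then have "P r = P z \<and> 1 - int r = - int z" unfolding tU unfolding U qt_eq[OF q0 t0 g] .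
      then have "r = z + 1" "P r = P z" by auto
      then show False using z by (simp add: P_def)
    qed
    have P'0: "P' \<noteq> 0" unfolding P'_def using Uinj by (subst prod_zero_iff) auto
    have Q10: "Q1 \<noteq> 0" unfolding Q1_def using tUz by (subst prod_zero_iff) auto
    have abmu: "alphabar q t la mu = t ^ (N + 1 - z) * (U (N+1) * q / U z) * ((U z / q - U z) * P') / Q1"
    proof -
      have Bmu: "\<forall>r\<in>{1..N+1}-{z}. t * Uw q t mu r - q * Uw q t mu z \<noteq> 0"
        using tUz q0 by (auto simp: Umu)
      have "alphabar q t la mu = alphabar q t (addrow mu z) mu" using lam by simp
      also have "\<dots> = t ^ (N + 1 - z) * (Uw q t mu (N+1) / Uw q t mu z) * (\<Prod>r\<in>{1..N}. (Uw q t mu r - q * Uw q t mu z))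
            / (\<Prod>r\<in>{1..N+1}-{z}. (t * Uw q t mu r - q * Uw q t mu z))"
        by (rule alphabar_closed[OF q0 t0 g mup adz lenmu Bmu])
      also have "(\<Prod>r\<in>{1..N}. (Uw q t mu r - q * Uw q t mu z)) = (U z / q - U z) * P'"
      proof -
        have "(\<Prod>r\<in>{1..N}. (Uw q t mu r - q * Uw q t mu z)) = (Uw q t mu z - q * Uw q t mu z) * (\<Prod>r\<in>{1..N}-{z}. (Uw q t mu r - q * Uw q t mu z))"
          using z by (subst prod.remove[of _ z]) auto
        also have "(\<Prod>r\<in>{1..N}-{z}. (Uw q t mu r - q * Uw q t mu z)) = P'"
          unfolding P'_def by (rule prod.cong) (use q0 in \<open>auto simp: Umu\<close>)
        finally show ?thesis using q0 by (simp add: Umu)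
      qed
      also have "(\<Prod>r\<in>{1..N+1}-{z}. (t * Uw q t mu r - q * Uw q t mu z)) = Q1"
        unfolding Q1_def by (rule prod.cong) (use q0 in \<open>auto simp: Umu\<close>)
      finally show ?thesis using z q0 Unz by (simp add: Umu)
    qed
    have B: "Bexp la mu nu = int y - int z"
      unfolding Bexp_def nud using nfun_addrow[OF la ad] nfun_addrow[OF mup adz] lam y z by simp
    have A: "Aexp la mu nu = P z - 1 - P y"
    proof -
      have "nfun' la = nfun' mu + int (part mu z)" using nfun'_addrow[OF mup adz] lam by simp
      moreover have "int (part mu z) = P z - 1"
        using part_delrow[OF la rz, of z] mu_def z by (simp add: P_def)
      ultimately show ?thesis unfolding Aexp_def nud using nfun'_addrow[OF la ad] by (simp add: P_def)
    qed
    have tp: "t powi (Bexp la mu nu - 1) = t ^ (y - 1) / t ^ z"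
    proof -
      have "Bexp la mu nu - 1 = int (y - 1) - int z" using B y by simp
      then show ?thesis using t0 by (simp add: power_int_diff)
    qed
    have g1: "q powi Aexp la mu nu * t powi Bexp la mu nu = (U z / q) / U y"
      unfolding A B wq unfolding U qt_div[OF q0 t0 g] by (simp add: qt_def algebra_simps)
    have g2: "q powi (Aexp la mu nu + 1) * t powi (Bexp la mu nu - 1) = U z / (t * U y)"
      unfolding A B tU unfolding U qt_div[OF q0 t0 g] by (simp add: qt_def algebra_simps)
    have zy: "t * U y - U z \<noteq> 0"
    proof
      assume "t * U y - U z = 0"
      then have "U z = t * U y" by simp
      then have "P z = P y \<and> - int z = 1 - int y" unfolding tU unfolding U qt_eq[OF q0 t0 g] .
      then have "z = y - 1" "P z = P y" "y \<noteq> 1" using z by auto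
      moreover have "P y < P (y - 1)" using ad \<open>y \<noteq> 1\<close> by (simp add: addable_def P_def)
      ultimately show False by simp
    qed
    have qz: "q * U y - U z \<noteq> 0" using PA0[of z] by simp
    have rel: "(t * U z - U z) * Q1 = (t * U y - U z) * Et (U z)"
    proof -
      have "(t * U z - U z) * Q1 = (\<Prod>r\<in>{1..N+1}. (t * U r - U z))"
        unfolding Q1_def using z by (subst prod.remove[of _ z]) auto
      also have "\<dots> = (t * U y - U z) * Et (U z)"
        unfolding Et_def using y by (subst prod.remove[of _ y]) auto
      finally show ?thesis .
    qed
    have "Pbar q t la mu nu =
        t ^ (y - 1) / t ^ z * (Ab * (1 / (t ^ (N + 1 - z) * (U (N+1) * q / U z) * ((U z / q - U z) * P') / Q1))) /
            ((1 - (U z / q) / U y) * (1 - U z / (t * U y)) / ((1 - q) * (1 - t)))"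
      unfolding Pbar_def gam_def Let_def unfolding if_not_P[OF mune] unfolding g1 g2 unfolding tp abnu betabar_def abmu ..
    also have "\<dots> = t ^ y * q * U y ^ 2 * Ab / (t ^ (N+1) * U (N+1)) * Et (U z) / ((0 - U z) * (q * U y - U z) * P')"
    proof (rule ID2_term)
      show "t ^ y = t * t ^ (y - 1)" using y by (cases y) auto
      show "t ^ (N + 1) = t ^ z * t ^ (N + 1 - z)" using z by (simp add: power_add[symmetric])
    qed (use t0 t1 q0 q1 Unz P'0 Q10 qz zy rel in auto)
    finally show ?thesis unfolding mu_def T2_def K2_def P'_def .
  qed
  have zero: "T2 z = 0" if z: "z \<in> {1..N}" and nrz: "\<not> removable la z" for z
  proof -
    have eq: "part la (z + 1) = part la z"
    proof -
      have "part la (z + 1) \<le> part la z" using part_mono[OF la, of z "z+1"] z by auto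
      then show ?thesis using nrz z by (auto simp: removable_def N_def)
    qed
    have zy: "z + 1 \<noteq> y"
    proof
      assume "z + 1 = y"
      then have "part la y < part la z" using ad z by (auto simp: addable_def)
      then show False using eq \<open>z + 1 = y\<close> by simp
    qed
    have "t * U (z + 1) - U z = 0"
      unfolding tU unfolding U using eq by (simp add: P_def)
    moreover have "z + 1 \<in> {1..N+1} - {y}" using z zy by auto
    ultimately have "Et (U z) = 0" unfolding Et_def by (subst prod_zero_iff) auto
    then show ?thesis by (simp add: T2_def)
  qed
  have lanot: "la \<notin> Downs la" by (simp add: Downs_def)
  have p0: "Pbar q t la la nu = t ^ (y - 1) * Ab"
  proof -
    have "nfun nu - nfun la = int (y - 1)" using nfun_addrow[OF la ad] nud y by simp
    then show ?thesis unfolding Pbar_def using abnu by simp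
  qed
  have "(\<Sum>mu\<in>Downs_star la. Pbar q t la mu nu) = Pbar q t la la nu + (\<Sum>mu\<in>Downs la. Pbar q t la mu nu)"
    unfolding Downs_star_def
  proof (rule sum.insert[OF _ lanot])
    have "Downs la = delrow la ` {z. removable la z}" by (rule Downs_eq[OF la])
    moreover have "finite {z. removable la z}" by (rule finite_subset[of _ "{1..length la}"]) (auto simp: removable_def)
    ultimately show "finite (Downs la)" by simp
  qed
  also have "(\<Sum>mu\<in>Downs la. Pbar q t la mu nu) = (\<Sum>z\<in>{z. removable la z}. Pbar q t la (delrow la z) nu)"
    unfolding Downs_eq[OF la] by (subst sum.reindex) (auto simp: inj_on_def intro: delrow_inj[OF la])
  also have "\<dots> = (\<Sum>z\<in>{z. removable la z}. T2 z)" by (rule sum.cong) (auto simp: trm)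
  also have "\<dots> = (\<Sum>z\<in>{1..N}. T2 z)"
    by (rule sum.mono_neutral_left) (auto simp: removable_def N_def zero)
  also have "\<dots> = - K2 * ((\<Prod>r\<in>{1..N+1}-{y}. (t * U r - 0)) / ((q * U y - 0) * (\<Prod>r\<in>{1..N}. (U r - 0)))
               + (\<Prod>r\<in>{1..N+1}-{y}. (t * U r - q * U y)) / ((0 - q * U y) * (\<Prod>r\<in>{1..N}. (U r - q * U y))))"
    unfolding T2_def Et_def
    proof (rule ID2_alg)
    show "inj_on U {1..N}" using Uinj by (auto simp: inj_on_def)
    show "0 \<notin> U ` {1..N}" using Unz by (metis imageE)
    show "q * U y \<notin> U ` {1..N}" using PA0' by (metis imageE)
    show "q * U y \<noteq> 0" using q0 Unz by simp
  qed (use y in auto)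
  finally have S: "(\<Sum>mu\<in>Downs_star la. Pbar q t la mu nu) = t ^ (y - 1) * Ab + - K2 * ((\<Prod>r\<in>{1..N+1}-{y}. (t * U r - 0)) / ((q * U y - 0) * (\<Prod>r\<in>{1..N}. (U r - 0)))
               + (\<Prod>r\<in>{1..N+1}-{y}. (t * U r - q * U y)) / ((0 - q * U y) * (\<Prod>r\<in>{1..N}. (U r - q * U y))))"
    using p0 by simp
  have F: "- K2 * ((\<Prod>r\<in>{1..N+1}-{y}. (t * U r - 0)) / ((q * U y - 0) * (\<Prod>r\<in>{1..N}. (U r - 0)))
               + (\<Prod>r\<in>{1..N+1}-{y}. (t * U r - q * U y)) / ((0 - q * U y) * (\<Prod>r\<in>{1..N}. (U r - q * U y))))
         + t ^ (y - 1) * Ab = 1"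
    unfolding K2_def Ab_def
    by (rule ID2_final) (use Unz y t0 q0 PA0 PB0 in \<open>auto simp: prod_zero_iff\<close>)
  show ?thesis using S F by simp
qed

theorem theorem4p14:
  fixes la :: "nat list" and q t :: real
  assumes "is_partition la"
    and "q \<noteq> 0" and "t \<noteq> 0"
    and generic: "\<And>i j :: int. (i, j) \<noteq> (0, 0) \<Longrightarrow> q powi i * t powi j \<noteq> 1"
  shows "(\<forall>mu \<in> Downs la. (\<Sum>nu \<in> Ups la. Pdown q t la mu nu) = 1)
     \<and> (\<forall>nu \<in> Ups la. (\<Sum>mu \<in> Downs_star la. Pbar q t la mu nu) = 1)"
proof -
  have g: "gen q t" unfolding gen_def using generic by blast
  show ?thesis using Pdown_sum[OF assms(1,2,3) g] Pbar_sum[OF assms(1,2,3) g] by blast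
qed

end
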